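(* Let $p$ be an odd prime. For every automorphism $\sigma$ of order $2$ of the uniform pro-$p$ group $\Gamma=\mathrm{Sl}_2^1(\mathbb Z_p)$, the action of $\sigma$ on $\Gamma$ is fixed-point-mixing modulo Frattini.
   Context: $\mathrm{Sl}_2^1(\mathbb Z_p)=\ker(\mathrm{SL}_2(\mathbb Z_p)\to\mathrm{SL}_2(\mathbb F_p))$. For $\sigma\in\mathrm{Aut}(\Gamma)$ of prime order: $\Gamma_\sigma^\circ$ = closed subgroup generated by $\sigma$-fixed elements, $\Gamma_\sigma$ its normal closure; $\sigma$ is fixed-point-mixing modulo Frattini if $\Gamma/\Gamma_\sigma$ acts non-trivially by conjugation on $\Gamma_\sigma/\Phi(\Gamma_\sigma)$, where $\Phi(H)=H^p[H,H]$. *)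

theory Defs
  imports "HOL-Algebra.Coset" "HOL-Computational_Algebra.Primes"
begin

text \<open>The p-adic integers Z_p, realised as the inverse limit of the rings Z/p^n:
  an element is a compatible sequence of residues x n in [0, p^n).\<close>

type_synonym zp = "nat \<Rightarrow> int"

definition Zp :: "nat \<Rightarrow> zp set" where
  "Zp p = {x. \<forall>n. 0 \<le> x n \<and> x n < int p ^ n \<and> x (Suc n) mod (int p ^ n) = x n}"

definition zp_add :: "nat \<Rightarrow> zp \<Rightarrow> zp \<Rightarrow> zp" where
  "zp_add p x y = (\<lambda>n. (x n + y n) mod (int p ^ n))"

definition zp_sub :: "nat \<Rightarrow> zp \<Rightarrow> zp \<Rightarrow> zp" where
  "zp_sub p x y = (\<lambda>n. (x n - y n) mod (int p ^ n))"

definition zp_mul :: "nat \<Rightarrow> zp \<Rightarrow> zp \<Rightarrow> zp" where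
  "zp_mul p x y = (\<lambda>n. (x n * y n) mod (int p ^ n))"

definition zp_one :: "nat \<Rightarrow> zp" where
  "zp_one p = (\<lambda>n. 1 mod (int p ^ n))"

definition zp_zero :: zp where
  "zp_zero = (\<lambda>n. 0)"

text \<open>2x2 matrices over Z_p, written (a, b, c, d) for the matrix [[a, b], [c, d]].\<close>

type_synonym mat2 = "zp \<times> zp \<times> zp \<times> zp"

definition mat_mul :: "nat \<Rightarrow> mat2 \<Rightarrow> mat2 \<Rightarrow> mat2" where
  "mat_mul p A B = (case A of (a, b, c, d) \<Rightarrow> case B of (a', b', c', d') \<Rightarrow>
     (zp_add p (zp_mul p a a') (zp_mul p b c'), zp_add p (zp_mul p a b') (zp_mul p b d'),
      zp_add p (zp_mul p c a') (zp_mul p d c'), zp_add p (zp_mul p c b') (zp_mul p d d')))"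

text \<open>Sl_2^1(Z_p): matrices in SL_2(Z_p) reducing to the identity modulo p
  (component n = 1 is the residue mod p).\<close>

definition Sl21_carrier :: "nat \<Rightarrow> mat2 set" where
  "Sl21_carrier p = {(a, b, c, d). a \<in> Zp p \<and> b \<in> Zp p \<and> c \<in> Zp p \<and> d \<in> Zp p
                 \<and> zp_sub p (zp_mul p a d) (zp_mul p b c) = zp_one p
                 \<and> a 1 = 1 \<and> b 1 = 0 \<and> c 1 = 0 \<and> d 1 = 1}"

definition Sl21 :: "nat \<Rightarrow> mat2 monoid" where
  "Sl21 p = \<lparr> carrier = Sl21_carrier p, monoid.mult = mat_mul p,
             monoid.one = (zp_one p, zp_zero, zp_zero, zp_one p) \<rparr>"

text \<open>Reduction modulo p^n; these reductions define the (profinite) topology.\<close>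

definition red :: "nat \<Rightarrow> mat2 \<Rightarrow> int \<times> int \<times> int \<times> int" where
  "red n A = (case A of (a, b, c, d) \<Rightarrow> (a n, b n, c n, d n))"

definition Sl21_closure :: "nat \<Rightarrow> mat2 set \<Rightarrow> mat2 set" where
  "Sl21_closure p S = {g \<in> carrier (Sl21 p). \<forall>n. \<exists>s\<in>S. red n s = red n g}"

definition Sl21_closed :: "nat \<Rightarrow> mat2 set \<Rightarrow> bool" where
  "Sl21_closed p S \<longleftrightarrow> S \<subseteq> carrier (Sl21 p) \<and> Sl21_closure p S \<subseteq> S"

definition continuous_aut :: "nat \<Rightarrow> (mat2 \<Rightarrow> mat2) \<Rightarrow> bool" where
  "continuous_aut p \<sigma> \<longleftrightarrow> \<sigma> \<in> iso (Sl21 p) (Sl21 p) \<and>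
     (\<forall>n. \<exists>m. \<forall>g\<in>carrier (Sl21 p). \<forall>h\<in>carrier (Sl21 p).
        red m g = red m h \<longrightarrow> red n (\<sigma> g) = red n (\<sigma> h))"

definition closed_subgroup_gen :: "nat \<Rightarrow> mat2 set \<Rightarrow> mat2 set" where
  "closed_subgroup_gen p S =
     \<Inter>{H. subgroup H (Sl21 p) \<and> Sl21_closed p H \<and> S \<subseteq> H}"

definition closed_normal_closure :: "nat \<Rightarrow> mat2 set \<Rightarrow> mat2 set" where
  "closed_normal_closure p S =
     \<Inter>{N. normal N (Sl21 p) \<and> Sl21_closed p N \<and> S \<subseteq> N}"

definition frattini :: "nat \<Rightarrow> mat2 set \<Rightarrow> mat2 set" where
  "frattini p H = closed_subgroup_gen p
     ({h [^]\<^bsub>Sl21 p\<^esub> p | h. h \<in> H} \<union>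
      {inv\<^bsub>Sl21 p\<^esub> h \<otimes>\<^bsub>Sl21 p\<^esub> inv\<^bsub>Sl21 p\<^esub> k \<otimes>\<^bsub>Sl21 p\<^esub> h \<otimes>\<^bsub>Sl21 p\<^esub> k | h k. h \<in> H \<and> k \<in> H})"

definition Gamma_sigma_circ :: "nat \<Rightarrow> (mat2 \<Rightarrow> mat2) \<Rightarrow> mat2 set" where
  "Gamma_sigma_circ p \<sigma> = closed_subgroup_gen p {g \<in> carrier (Sl21 p). \<sigma> g = g}"

definition Gamma_sigma :: "nat \<Rightarrow> (mat2 \<Rightarrow> mat2) \<Rightarrow> mat2 set" where
  "Gamma_sigma p \<sigma> = closed_normal_closure p (Gamma_sigma_circ p \<sigma>)"

text \<open>Fixed-point-mixing modulo Frattini: the conjugation action of Gamma (which factors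
  through Gamma / Gamma_sigma) on Gamma_sigma / Phi(Gamma_sigma) is non-trivial.\<close>

definition fpm_mod_frattini :: "nat \<Rightarrow> (mat2 \<Rightarrow> mat2) \<Rightarrow> bool" where
  "fpm_mod_frattini p \<sigma> \<longleftrightarrow>
     (\<exists>g\<in>carrier (Sl21 p). \<exists>h\<in>Gamma_sigma p \<sigma>.
        r_coset (Sl21 p) (frattini p (Gamma_sigma p \<sigma>))
          (g \<otimes>\<^bsub>Sl21 p\<^esub> h \<otimes>\<^bsub>Sl21 p\<^esub> inv\<^bsub>Sl21 p\<^esub> g)
        \<noteq> r_coset (Sl21 p) (frattini p (Gamma_sigma p \<sigma>)) h)"

end

theory Submission
  imports Defs
begin

datatype m2 = M2 (e11: int) (e12: int) (e21: int) (e22: int)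

instantiation m2 :: ring_1
begin
definition "zero_m2 = M2 0 0 0 0"
definition "one_m2 = M2 1 0 0 1"
definition "plus_m2 A B = M2 (e11 A + e11 B) (e12 A + e12 B) (e21 A + e21 B) (e22 A + e22 B)"
definition "minus_m2 A B = M2 (e11 A - e11 B) (e12 A - e12 B) (e21 A - e21 B) (e22 A - e22 B)"
definition "uminus_m2 A = M2 (- e11 A) (- e12 A) (- e21 A) (- e22 A)"
definition "times_m2 A B = M2 (e11 A * e11 B + e12 A * e21 B) (e11 A * e12 B + e12 A * e22 B)
   (e21 A * e11 B + e22 A * e21 B) (e21 A * e12 B + e22 A * e22 B)"
instance
  apply standard 
  apply (simp_all add: zero_m2_def one_m2_def plus_m2_def minus_m2_def uminus_m2_def times_m2_def)
  by (simp_all add: algebra_simps)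
end

lemma m2_simps[simp]:
  "M2 a b c d + M2 a' b' c' d' = M2 (a+a') (b+b') (c+c') (d+d')"
  "M2 a b c d - M2 a' b' c' d' = M2 (a-a') (b-b') (c-c') (d-d')"
  "- M2 a b c d = M2 (-a) (-b) (-c) (-d)"
  "M2 a b c d * M2 a' b' c' d' = M2 (a*a'+b*c') (a*b'+b*d') (c*a'+d*c') (c*b'+d*d')"
  by (simp_all add: plus_m2_def minus_m2_def uminus_m2_def times_m2_def)

lemma m2_01: "(0::m2) = M2 0 0 0 0" "(1::m2) = M2 1 0 0 1"
  by (simp_all add: zero_m2_def one_m2_def)

lemma m2_01_sel[simp]: "e11 0 = 0" "e12 0 = 0" "e21 0 = 0" "e22 0 = 0"
  "e11 1 = 1" "e12 1 = 0" "e21 1 = 0" "e22 1 = 1"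
  by (simp_all add: zero_m2_def one_m2_def)

lemma of_nat_m2: "(of_nat n :: m2) = M2 (int n) 0 0 (int n)"
  by (induction n) (auto simp: algebra_simps m2_01)

lemma of_int_m2: "(of_int k :: m2) = M2 k 0 0 k"
proof (cases k rule: int_cases)
  case (nonneg n) then show ?thesis by (simp add: of_nat_m2)
next
  case (neg n) then show ?thesis
    by (simp only: of_int_minus of_int_of_nat_eq of_nat_m2) (simp add: algebra_simps)
qed

lemma of_int_sel[simp]: "e11 (of_int k) = k" "e12 (of_int k) = 0" "e21 (of_int k) = 0" "e22 (of_int k) = k"
  by (simp_all add: of_int_m2)

lemma of_int_comm: "of_int k * (A::m2) = A * of_int k"
  by (cases A) (simp add: algebra_simps of_int_m2)

definition mdet :: "m2 \<Rightarrow> int" where "mdet A = e11 A * e22 A - e12 A * e21 A"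
definition mtr :: "m2 \<Rightarrow> int" where "mtr A = e11 A + e22 A"
definition adj :: "m2 \<Rightarrow> m2" where "adj A = M2 (e22 A) (- e12 A) (- e21 A) (e11 A)"

lemma mdet_mult: "mdet (A * B) = mdet A * mdet B"
  by (cases A; cases B) (simp add: mdet_def algebra_simps)

lemma adj_mult: "A * adj A = of_int (mdet A)" "adj A * A = of_int (mdet A)"
  by (cases A; simp add: mdet_def adj_def algebra_simps of_int_m2)+

definition mcong :: "int \<Rightarrow> m2 \<Rightarrow> m2 \<Rightarrow> bool" where
  "mcong q A B \<longleftrightarrow> (\<exists>C. A = B + of_int q * C)"

lemma mcong_entries: "mcong q A B \<longleftrightarrow> q dvd (e11 A - e11 B) \<and> q dvd (e12 A - e12 B)
  \<and> q dvd (e21 A - e21 B) \<and> q dvd (e22 A - e22 B)"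
proof
  assume "mcong q A B" then obtain C where "A = B + of_int q * C" by (auto simp: mcong_def)
  then show "q dvd (e11 A - e11 B) \<and> q dvd (e12 A - e12 B)
  \<and> q dvd (e21 A - e21 B) \<and> q dvd (e22 A - e22 B)" by (cases B; cases C) (auto simp: of_int_m2)
next
  assume "q dvd (e11 A - e11 B) \<and> q dvd (e12 A - e12 B)
  \<and> q dvd (e21 A - e21 B) \<and> q dvd (e22 A - e22 B)"
  then obtain a b c d where "e11 A - e11 B = q*a" "e12 A - e12 B = q*b" "e21 A - e21 B = q*c" "e22 A - e22 B = q*d"
    by (auto elim!: dvdE)
  then have "A = B + of_int q * M2 a b c d" by (cases A; cases B) (auto simp: algebra_simps of_int_m2)
  then show "mcong q A B" unfolding mcong_def by (intro exI[of _ "M2 a b c d"])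
qed

lemma mcong_refl[simp]: "mcong q A A"
  unfolding mcong_entries by simp

lemma mcong_sym: "mcong q A B \<Longrightarrow> mcong q B A"
  unfolding mcong_entries by (metis dvd_diff_commute)

lemma mcong_trans: "mcong q A B \<Longrightarrow> mcong q B C \<Longrightarrow> mcong q A C"
  unfolding mcong_entries by (metis diff_add_cancel dvd_add add_diff_eq diff_diff_eq2)

lemma dvd_add_diff: "(q::int) dvd (x-y) \<Longrightarrow> q dvd (z-w) \<Longrightarrow> q dvd (x+z - (y+w))"
proof -
  assume "q dvd (x-y)" "q dvd (z-w)"
  then have "q dvd ((x-y) + (z-w))" by (rule dvd_add)
  then show ?thesis by (simp add: algebra_simps)
qed

lemma mcong_add: "mcong q A B \<Longrightarrow> mcong q C D \<Longrightarrow> mcong q (A + C) (B + D)"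
  unfolding mcong_entries by (cases A; cases B; cases C; cases D) (simp add: dvd_add_diff)

lemma mcong_minus: "mcong q A B \<Longrightarrow> mcong q (- A) (- B)"
  unfolding mcong_entries by (cases A; cases B) (simp add: dvd_diff_commute)

lemma mcong_diff: "mcong q A B \<Longrightarrow> mcong q C D \<Longrightarrow> mcong q (A - C) (B - D)"
  by (metis diff_conv_add_uminus mcong_add mcong_minus)

lemma mcong_mult: "mcong q A B \<Longrightarrow> mcong q C D \<Longrightarrow> mcong q (A * C) (B * D)"
proof -
  assume "mcong q A B" "mcong q C D"
  then obtain E F where e: "A = B + of_int q * E" "C = D + of_int q * F" by (auto simp: mcong_def)
  have "A * C = B * D + of_int q * (E * D + B * F + of_int q * (E * F))"
    unfolding e by (cases B; cases D; cases E; cases F) (simp add: algebra_simps of_int_m2)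
  then show ?thesis by (auto simp: mcong_def)
qed

lemma mcong_dvd: "mcong q A B \<Longrightarrow> r dvd q \<Longrightarrow> mcong r A B"
  unfolding mcong_entries using dvd_trans by blast

lemma mcong_smult: "mcong q A B \<Longrightarrow> mcong (k*q) (of_int k * A) (of_int k * B)"
  unfolding mcong_entries by (cases A; cases B) (auto simp: right_diff_distrib[symmetric] of_int_m2)

lemma mcong_det: "mcong q A B \<Longrightarrow> q dvd (mdet A - mdet B)"
proof -
  assume "mcong q A B"
  then obtain C where c: "A = B + of_int q * C" by (auto simp: mcong_def)
  show ?thesis unfolding c by (cases B; cases C) (simp add: mdet_def algebra_simps of_int_m2)
qed

definition rep :: "nat \<Rightarrow> mat2 \<Rightarrow> m2" where
  "rep n A = (case A of (a, b, c, d) \<Rightarrow> M2 (a n) (b n) (c n) (d n))"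

definition mmod :: "int \<Rightarrow> m2 \<Rightarrow> m2" where
  "mmod q M = M2 (e11 M mod q) (e12 M mod q) (e21 M mod q) (e22 M mod q)"

definition ofseq :: "nat \<Rightarrow> (nat \<Rightarrow> m2) \<Rightarrow> mat2" where
  "ofseq p F = ((\<lambda>n. e11 (F n) mod int p ^ n), (\<lambda>n. e12 (F n) mod int p ^ n),
                (\<lambda>n. e21 (F n) mod int p ^ n), (\<lambda>n. e22 (F n) mod int p ^ n))"

lemma mcong_mmod: "mcong q (mmod q M) M"
  unfolding mcong_entries mmod_def by (simp add: mod_eq_dvd_iff[symmetric])

lemma rep_ofseq: "rep n (ofseq p F) = mmod (int p ^ n) (F n)"
  by (simp add: rep_def ofseq_def mmod_def)

lemma red_rep: "red n A = red n B \<longleftrightarrow> rep n A = rep n B"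
  by (cases A; cases B) (auto simp: red_def rep_def)

lemma eq_by_rep: "(\<And>n. rep n A = rep n B) \<Longrightarrow> A = B"
  by (cases A; cases B) (auto simp: rep_def fun_eq_iff)

lemma mat_mul_ofseq: "mat_mul p A B = ofseq p (\<lambda>n. rep n A * rep n B)"
  by (cases A; cases B)
     (simp add: mat_mul_def ofseq_def rep_def zp_add_def zp_mul_def fun_eq_iff mod_add_eq)

lemma ofseq_cong: "(\<And>n. mcong (int p ^ n) (F n) (G n)) \<Longrightarrow> ofseq p F = ofseq p G"
  unfolding ofseq_def mcong_entries
  by (simp add: fun_eq_iff mod_eq_dvd_iff)

lemma Zp_compat: "x \<in> Zp p \<Longrightarrow> m \<le> n \<Longrightarrow> x n mod int p ^ m = x m"
proof (induction n)
  case 0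
  then have "m = 0" by simp
  moreover from 0 have "0 \<le> x 0 \<and> x 0 < int p ^ 0" unfolding Zp_def by blast
  ultimately show ?case by simp
next
  case (Suc n)
  show ?case
  proof (cases "m = Suc n")
    case True
    have "0 \<le> x (Suc n) \<and> x (Suc n) < int p ^ Suc n" using Suc.prems unfolding Zp_def by blast
    then have "x (Suc n) mod int p ^ Suc n = x (Suc n)" by (intro mod_pos_pos_trivial) auto
    then show ?thesis using True by simp
  next
    case False
    then have "m \<le> n" using Suc.prems by simp
    have "int p ^ m dvd int p ^ n" using \<open>m \<le> n\<close> by (simp add: le_imp_power_dvd)
    then have "x (Suc n) mod int p ^ m = (x (Suc n) mod int p ^ n) mod int p ^ m"
      by (simp add: mod_mod_cancel)
    also have "\<dots> = x n mod int p ^ m" using Suc.prems by (simp add: Zp_def)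
    finally show ?thesis using Suc.IH[OF Suc.prems(1) \<open>m \<le> n\<close>] by simp
  qed
qed

locale pp =
  fixes p :: nat
  assumes prime_p: "prime p" and odd_p: "odd p"
begin

abbreviation "G \<equiv> Sl21 p"
abbreviation q :: "nat \<Rightarrow> int" where "q n \<equiv> int p ^ n"

lemma p_ge3: "p \<ge> 3"
proof -
  have "p \<ge> 2" using prime_p prime_ge_2_nat by blast
  moreover have "p \<noteq> 2" using odd_p by auto
  ultimately show ?thesis by simp
qed

lemma q_pos: "q n > 0" using p_ge3 by simp

lemma Zp_iff: "x \<in> Zp p \<longleftrightarrow> (\<forall>n. 0 \<le> x n \<and> x n < q n \<and> x (Suc n) mod q n = x n)"
  by (simp add: Zp_def)

definition good :: "(nat \<Rightarrow> m2) \<Rightarrow> bool" where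
  "good F \<longleftrightarrow> (\<forall>n. mcong (q n) (F (Suc n)) (F n)) \<and> (\<forall>n. q n dvd (mdet (F n) - 1)) \<and> mcong (int p) (F 1) 1"

lemma ofseq_entry_Zp:
  assumes "\<And>n. (q n) dvd (f (Suc n) - f n)"
  shows "(\<lambda>n. f n mod q n) \<in> Zp p"
proof -
  have "(f (Suc n) mod q (Suc n)) mod q n = f n mod q n" for n
  proof -
    have "q n dvd q (Suc n)" by simp
    then have "(f (Suc n) mod q (Suc n)) mod q n = f (Suc n) mod q n" by (simp add: mod_mod_cancel)
    also have "\<dots> = f n mod q n" using assms[of n] by (simp add: mod_eq_dvd_iff)
    finally show ?thesis .
  qed
  then show ?thesis unfolding Zp_iff using q_pos by simp
qed

lemma ofseq_carrier:
  assumes "good F"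
  shows "ofseq p F \<in> carrier G"
proof -
  from assms have c: "\<And>n. mcong (q n) (F (Suc n)) (F n)" and d: "\<And>n. q n dvd (mdet (F n) - 1)"
    and o: "mcong (int p) (F 1) 1" by (auto simp: good_def)
  note ce = c[unfolded mcong_entries]
  have Z: "(\<lambda>n. e11 (F n) mod q n) \<in> Zp p" "(\<lambda>n. e12 (F n) mod q n) \<in> Zp p"
      "(\<lambda>n. e21 (F n) mod q n) \<in> Zp p" "(\<lambda>n. e22 (F n) mod q n) \<in> Zp p"
    using ce by (auto intro!: ofseq_entry_Zp)
  have det: "zp_sub p (zp_mul p (\<lambda>n. e11 (F n) mod q n) (\<lambda>n. e22 (F n) mod q n))
          (zp_mul p (\<lambda>n. e12 (F n) mod q n) (\<lambda>n. e21 (F n) mod q n)) = zp_one p"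
  proof -
    have "((e11 (F n) mod q n * (e22 (F n) mod q n)) mod q n -
          (e12 (F n) mod q n * (e21 (F n) mod q n)) mod q n) mod q n = 1 mod q n" for n
    proof -
      have "((e11 (F n) mod q n * (e22 (F n) mod q n)) mod q n -
          (e12 (F n) mod q n * (e21 (F n) mod q n)) mod q n) mod q n = mdet (F n) mod q n"
        by (simp add: mdet_def mod_diff_eq mod_mult_eq)
      also have "\<dots> = 1 mod q n" using d[of n] by (simp add: mod_eq_dvd_iff)
      finally show ?thesis .
    qed
    then show ?thesis by (simp add: zp_sub_def zp_mul_def zp_one_def fun_eq_iff)
  qed
  have "p > 1" using p_ge3 by simp
  have one: "e11 (F 1) mod int p = 1" "e12 (F 1) mod int p = 0" "e21 (F 1) mod int p = 0"
     "e22 (F 1) mod int p = 1"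
    using o \<open>p > 1\<close> unfolding mcong_entries by (auto simp: mod_eq_dvd_iff[symmetric] elim!: dvdE)
  show ?thesis
    using Z det one by (simp add: Sl21_def Sl21_carrier_def ofseq_def)
qed

lemma carrier_D:
  assumes "A \<in> carrier G"
  shows "good (\<lambda>n. rep n A)" and "A = ofseq p (\<lambda>n. rep n A)"
    and "\<And>n. mmod (q n) (rep n A) = rep n A"
proof -
  obtain a b c d where A: "A = (a,b,c,d)" by (cases A)
  from assms have Z: "a \<in> Zp p" "b \<in> Zp p" "c \<in> Zp p" "d \<in> Zp p"
    and det: "zp_sub p (zp_mul p a d) (zp_mul p b c) = zp_one p"
    and one: "a 1 = 1" "b 1 = 0" "c 1 = 0" "d 1 = 1"
    by (auto simp: A Sl21_def Sl21_carrier_def)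
  have red: "x n mod q n = x n" if "x \<in> Zp p" for x n
    using that by (simp add: Zp_iff)
  show "\<And>n. mmod (q n) (rep n A) = rep n A"
    using red Z by (simp add: A rep_def mmod_def)
  then show "A = ofseq p (\<lambda>n. rep n A)"
    by (intro eq_by_rep) (simp add: rep_ofseq)
  have c1: "mcong (q n) (rep (Suc n) A) (rep n A)" for n
    unfolding mcong_entries using Z by (simp add: A rep_def Zp_iff mod_eq_dvd_iff[symmetric])
  have "mdet (rep n A) mod q n = 1 mod q n" for n
  proof -
    have "(a n * d n mod q n - b n * c n mod q n) mod q n = 1 mod q n"
      using det by (simp add: zp_sub_def zp_mul_def zp_one_def fun_eq_iff)
    then show ?thesis by (simp add: A rep_def mdet_def mod_diff_eq)
  qed
  then have c2: "q n dvd (mdet (rep n A) - 1)" for n by (simp add: mod_eq_dvd_iff)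
  have c3: "mcong (int p) (rep 1 A) 1" using one by (simp add: A rep_def mcong_entries)
  show "good (\<lambda>n. rep n A)" using c1 c2 c3 by (simp add: good_def)
qed

lemma rep_compat:
  assumes "A \<in> carrier G" "m \<le> n"
  shows "mcong (q m) (rep n A) (rep m A)"
proof -
  obtain a b c d where A: "A = (a,b,c,d)" by (cases A)
  from assms have Z: "a \<in> Zp p" "b \<in> Zp p" "c \<in> Zp p" "d \<in> Zp p"
    by (auto simp: A Sl21_def Sl21_carrier_def)
  have r: "x m mod q m = x m" if "x \<in> Zp p" for x using that by (simp add: Zp_iff)
  show ?thesis unfolding mcong_entries
    using Zp_compat[OF _ assms(2), of _ p] Z r
    by (simp add: A rep_def mod_eq_dvd_iff[symmetric])
qed

lemma rep_eq_of_cong: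
  assumes "A \<in> carrier G" "B \<in> carrier G" "mcong (q n) (rep n A) (rep n B)"
  shows "rep n A = rep n B"
proof -
  have "mmod (q n) (rep n A) = mmod (q n) (rep n B)"
    using assms(3) unfolding mcong_entries mmod_def by (simp add: mod_eq_dvd_iff)
  then show ?thesis using carrier_D(3)[OF assms(1)] carrier_D(3)[OF assms(2)] by simp
qed

lemma rep_ofseq_good: "good F \<Longrightarrow> mcong (q n) (rep n (ofseq p F)) (F n)"
  by (simp add: rep_ofseq mcong_mmod)

lemma one_G: "\<one>\<^bsub>G\<^esub> = ofseq p (\<lambda>_. 1)"
  by (simp add: Sl21_def ofseq_def zp_one_def zp_zero_def)

lemma good_const: "mdet M = 1 \<Longrightarrow> mcong (int p) M 1 \<Longrightarrow> good (\<lambda>_. M)"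
  by (simp add: good_def)

lemma dvd_det_mult: "(k::int) dvd (x - 1) \<Longrightarrow> k dvd (y - 1) \<Longrightarrow> k dvd (x*y - 1)"
proof -
  assume "k dvd (x - 1)" "k dvd (y - 1)"
  then have "k dvd ((x - 1) * y + (y - 1))" by simp
  then show ?thesis by (simp add: algebra_simps)
qed

lemma good_mult: "good F \<Longrightarrow> good H \<Longrightarrow> good (\<lambda>n. F n * H n)"
  unfolding good_def
  using mcong_mult[of "int p" "F 1" 1 "H 1" 1] mcong_mult dvd_det_mult by (simp add: mdet_mult)

end

declare mcong_trans[trans]

context pp begin

lemma mult_G: "A \<otimes>\<^bsub>G\<^esub> B = mat_mul p A B" by (simp add: Sl21_def)
lemma carrier_G: "carrier G = Sl21_carrier p" by (simp add: Sl21_def)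

lemma mult_carrier: "A \<in> carrier G \<Longrightarrow> B \<in> carrier G \<Longrightarrow> A \<otimes>\<^bsub>G\<^esub> B \<in> carrier G"
  unfolding mult_G mat_mul_ofseq
  by (intro ofseq_carrier good_mult carrier_D(1))

lemma rep_mult: "A \<in> carrier G \<Longrightarrow> B \<in> carrier G \<Longrightarrow>
   mcong (q n) (rep n (A \<otimes>\<^bsub>G\<^esub> B)) (rep n A * rep n B)"
  unfolding mult_G mat_mul_ofseq rep_ofseq by (rule mcong_mmod)

lemma good_one: "good (\<lambda>_. 1)" by (rule good_const) (simp_all add: mdet_def)

lemma one_carrier: "\<one>\<^bsub>G\<^esub> \<in> carrier G"
  unfolding one_G by (rule ofseq_carrier[OF good_one])

lemma rep_one: "mcong (q n) (rep n \<one>\<^bsub>G\<^esub>) 1"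
  unfolding one_G rep_ofseq by (rule mcong_mmod)

lemma eq_of_cong: "A \<in> carrier G \<Longrightarrow> B \<in> carrier G \<Longrightarrow> (\<And>n. mcong (q n) (rep n A) (rep n B)) \<Longrightarrow> A = B"
  by (intro eq_by_rep rep_eq_of_cong)

lemma mdet_adj: "mdet (adj M) = mdet M" by (simp add: mdet_def adj_def algebra_simps)

lemma dvd_neg_diff: "(k::int) dvd (x - y) \<Longrightarrow> k dvd (- x - - y)"
proof -
  assume "k dvd (x - y)"
  then have "k dvd - (x - y)" by (simp only: dvd_minus_iff)
  then show ?thesis by simp
qed

lemma mcong_adj: "mcong k A B \<Longrightarrow> mcong k (adj A) (adj B)"
  unfolding mcong_entries adj_def using dvd_neg_diff by simp

lemma adj_one: "adj 1 = 1" by (simp add: adj_def m2_01)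

definition minv :: "mat2 \<Rightarrow> mat2" where "minv A = ofseq p (\<lambda>n. adj (rep n A))"

lemma good_adj: "good F \<Longrightarrow> good (\<lambda>n. adj (F n))"
  unfolding good_def mdet_adj using mcong_adj[of "int p" "F 1" 1] mcong_adj unfolding adj_one by simp

lemma minv_carrier: "A \<in> carrier G \<Longrightarrow> minv A \<in> carrier G"
  unfolding minv_def by (intro ofseq_carrier good_adj carrier_D(1))

lemma rep_minv: "A \<in> carrier G \<Longrightarrow> mcong (q n) (rep n (minv A)) (adj (rep n A))"
  unfolding minv_def rep_ofseq by (rule mcong_mmod)

lemma det_rep: "A \<in> carrier G \<Longrightarrow> q n dvd (mdet (rep n A) - 1)"
  using carrier_D(1) by (simp add: good_def)

lemma mcong_of_det: "q n dvd (d - 1) \<Longrightarrow> mcong (q n) (of_int d) 1"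
  by (simp add: mcong_entries)

lemma rep_mult3: "x \<in> carrier G \<Longrightarrow> y \<in> carrier G \<Longrightarrow> z \<in> carrier G \<Longrightarrow>
   mcong (q n) (rep n (x \<otimes>\<^bsub>G\<^esub> y \<otimes>\<^bsub>G\<^esub> z)) (rep n x * rep n y * rep n z)"
proof -
  assume c: "x \<in> carrier G" "y \<in> carrier G" "z \<in> carrier G"
  have "mcong (q n) (rep n (x \<otimes>\<^bsub>G\<^esub> y \<otimes>\<^bsub>G\<^esub> z)) (rep n (x \<otimes>\<^bsub>G\<^esub> y) * rep n z)"
    by (rule rep_mult[OF mult_carrier[OF c(1,2)] c(3)])
  also have "mcong (q n) \<dots> (rep n x * rep n y * rep n z)"
    by (rule mcong_mult[OF rep_mult[OF c(1,2)] mcong_refl])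
  finally show ?thesis .
qed

lemma rep_mult3': "x \<in> carrier G \<Longrightarrow> y \<in> carrier G \<Longrightarrow> z \<in> carrier G \<Longrightarrow>
   mcong (q n) (rep n (x \<otimes>\<^bsub>G\<^esub> (y \<otimes>\<^bsub>G\<^esub> z))) (rep n x * rep n y * rep n z)"
proof -
  assume c: "x \<in> carrier G" "y \<in> carrier G" "z \<in> carrier G"
  have "mcong (q n) (rep n (x \<otimes>\<^bsub>G\<^esub> (y \<otimes>\<^bsub>G\<^esub> z))) (rep n x * rep n (y \<otimes>\<^bsub>G\<^esub> z))"
    by (rule rep_mult[OF c(1) mult_carrier[OF c(2,3)]])
  also have "mcong (q n) \<dots> (rep n x * (rep n y * rep n z))"
    by (rule mcong_mult[OF mcong_refl rep_mult[OF c(2,3)]])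
  finally show ?thesis by (simp add: mult.assoc)
qed

lemma minv_l: "x \<in> carrier G \<Longrightarrow> minv x \<otimes>\<^bsub>G\<^esub> x = \<one>\<^bsub>G\<^esub>"
proof (rule eq_of_cong)
  assume c: "x \<in> carrier G"
  show "minv x \<otimes>\<^bsub>G\<^esub> x \<in> carrier G" by (rule mult_carrier[OF minv_carrier[OF c] c])
  show "\<one>\<^bsub>G\<^esub> \<in> carrier G" by (rule one_carrier)
  fix n
  have "mcong (q n) (rep n (minv x \<otimes>\<^bsub>G\<^esub> x)) (rep n (minv x) * rep n x)"
    by (rule rep_mult[OF minv_carrier[OF c] c])
  also have "mcong (q n) \<dots> (adj (rep n x) * rep n x)"
    by (rule mcong_mult[OF rep_minv[OF c] mcong_refl])
  also have "adj (rep n x) * rep n x = of_int (mdet (rep n x))" by (rule adj_mult)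
  also have "mcong (q n) \<dots> 1" by (rule mcong_of_det[OF det_rep[OF c]])
  also have "mcong (q n) 1 (rep n \<one>\<^bsub>G\<^esub>)" by (rule mcong_sym[OF rep_one])
  finally show "mcong (q n) (rep n (minv x \<otimes>\<^bsub>G\<^esub> x)) (rep n \<one>\<^bsub>G\<^esub>)" .
qed

lemma one_l: "x \<in> carrier G \<Longrightarrow> \<one>\<^bsub>G\<^esub> \<otimes>\<^bsub>G\<^esub> x = x"
proof (rule eq_of_cong)
  assume c: "x \<in> carrier G"
  show "\<one>\<^bsub>G\<^esub> \<otimes>\<^bsub>G\<^esub> x \<in> carrier G" by (rule mult_carrier[OF one_carrier c])
  show "x \<in> carrier G" by fact
  fix n
  have "mcong (q n) (rep n (\<one>\<^bsub>G\<^esub> \<otimes>\<^bsub>G\<^esub> x)) (rep n \<one>\<^bsub>G\<^esub> * rep n x)"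
    by (rule rep_mult[OF one_carrier c])
  also have "mcong (q n) \<dots> (1 * rep n x)"
    by (rule mcong_mult[OF rep_one mcong_refl])
  finally show "mcong (q n) (rep n (\<one>\<^bsub>G\<^esub> \<otimes>\<^bsub>G\<^esub> x)) (rep n x)" by simp
qed

theorem group_G: "group G"
proof (rule groupI)
  fix x y assume "x \<in> carrier G" "y \<in> carrier G"
  then show "x \<otimes>\<^bsub>G\<^esub> y \<in> carrier G" by (rule mult_carrier)
next
  show "\<one>\<^bsub>G\<^esub> \<in> carrier G" by (rule one_carrier)
next
  fix x y z assume c: "x \<in> carrier G" "y \<in> carrier G" "z \<in> carrier G"
  show "x \<otimes>\<^bsub>G\<^esub> y \<otimes>\<^bsub>G\<^esub> z = x \<otimes>\<^bsub>G\<^esub> (y \<otimes>\<^bsub>G\<^esub> z)"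
  proof (rule eq_of_cong)
    show "x \<otimes>\<^bsub>G\<^esub> y \<otimes>\<^bsub>G\<^esub> z \<in> carrier G"
      by (rule mult_carrier[OF mult_carrier[OF c(1,2)] c(3)])
    show "x \<otimes>\<^bsub>G\<^esub> (y \<otimes>\<^bsub>G\<^esub> z) \<in> carrier G"
      by (rule mult_carrier[OF c(1) mult_carrier[OF c(2,3)]])
    fix n
    show "mcong (q n) (rep n (x \<otimes>\<^bsub>G\<^esub> y \<otimes>\<^bsub>G\<^esub> z)) (rep n (x \<otimes>\<^bsub>G\<^esub> (y \<otimes>\<^bsub>G\<^esub> z)))"
      by (rule mcong_trans[OF rep_mult3[OF c] mcong_sym[OF rep_mult3'[OF c]]])
  qed
next
  fix x assume c: "x \<in> carrier G"
  then show "\<one>\<^bsub>G\<^esub> \<otimes>\<^bsub>G\<^esub> x = x" by (rule one_l)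
next
  fix x assume c: "x \<in> carrier G"
  show "\<exists>y\<in>carrier G. y \<otimes>\<^bsub>G\<^esub> x = \<one>\<^bsub>G\<^esub>"
    using minv_carrier[OF c] minv_l[OF c] by blast
qed

sublocale grp: group G by (rule group_G)

lemma inv_minv: "A \<in> carrier G \<Longrightarrow> inv\<^bsub>G\<^esub> A = minv A"
  using minv_l minv_carrier grp.inv_equality by blast

lemma rep_inv: "A \<in> carrier G \<Longrightarrow> mcong (q n) (rep n (inv\<^bsub>G\<^esub> A)) (adj (rep n A))"
  using inv_minv rep_minv by simp

lemma rep_pow: "A \<in> carrier G \<Longrightarrow> mcong (q n) (rep n (A [^]\<^bsub>G\<^esub> (k::nat))) ((rep n A) ^ k)"
proof (induction k)
  case 0 then show ?case using rep_one by simp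
next
  case (Suc k)
  have "mcong (q n) (rep n (A [^]\<^bsub>G\<^esub> k \<otimes>\<^bsub>G\<^esub> A)) (rep n (A [^]\<^bsub>G\<^esub> k) * rep n A)"
    using Suc.prems by (intro rep_mult) auto
  also have "mcong (q n) \<dots> ((rep n A) ^ k * rep n A)"
    using Suc by (intro mcong_mult) auto
  finally show ?case by (simp add: power_commutes)
qed

end

lemma mcong_cancel: "k \<noteq> 0 \<Longrightarrow> mcong (k * r) (of_int k * X) (of_int k * Y) \<Longrightarrow> mcong r X Y"
  unfolding mcong_entries by (cases X; cases Y) (simp add: right_diff_distrib[symmetric] of_int_m2)

lemma mcong_0: "mcong 1 A B" by (simp add: mcong_entries)

lemma mcong_add_smult: "mcong q (A + of_int q * B) A"
  unfolding mcong_def by (rule exI[of _ B]) simp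

context pp begin

definition lev :: "nat \<Rightarrow> mat2 set" where
  "lev j = {A \<in> carrier G. mcong (q j) (rep j A) 1}"

definition lead :: "nat \<Rightarrow> mat2 \<Rightarrow> m2 \<Rightarrow> bool" where
  "lead j A X \<longleftrightarrow> A \<in> carrier G \<and> mcong (q (Suc j)) (rep (Suc j) A) (1 + of_int (q j) * X)"

lemma lev_carrier: "A \<in> lev j \<Longrightarrow> A \<in> carrier G" by (simp add: lev_def)

lemma lev_rep: "A \<in> lev j \<Longrightarrow> j \<le> n \<Longrightarrow> mcong (q j) (rep n A) 1"
  unfolding lev_def using rep_compat mcong_trans by blast

lemma lev_1: "lev 1 = carrier G"
  using carrier_D(1) by (auto simp: lev_def good_def)

lemma lev_0: "lev 0 = carrier G"
  by (auto simp: lev_def mcong_0)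

lemma lead_carrier: "lead j A X \<Longrightarrow> A \<in> carrier G" by (simp add: lead_def)

lemma lead_rep: "lead j A X \<Longrightarrow> Suc j \<le> n \<Longrightarrow> mcong (q (Suc j)) (rep n A) (1 + of_int (q j) * X)"
proof -
  assume a: "lead j A X" and n: "Suc j \<le> n"
  have "mcong (q (Suc j)) (rep n A) (rep (Suc j) A)" by (rule rep_compat[OF lead_carrier[OF a] n])
  also have "mcong (q (Suc j)) (rep (Suc j) A) (1 + of_int (q j) * X)" using a by (simp add: lead_def)
  finally show ?thesis .
qed

lemma mcong_1_smult: "mcong k (1 + of_int k * X) 1"
  unfolding mcong_def by (rule exI[of _ X]) simp

lemma lead_lev: "lead j A X \<Longrightarrow> A \<in> lev j"
proof -
  assume l: "lead j A X"
  have ca: "A \<in> carrier G" by (rule lead_carrier[OF l])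
  have "mcong (q j) (rep j A) (rep (Suc j) A)" by (rule mcong_sym[OF rep_compat[OF ca]]) simp
  also have "mcong (q j) (rep (Suc j) A) (1 + of_int (q j) * X)"
    using l by (rule_tac mcong_dvd[of "q (Suc j)"]) (simp_all add: lead_def)
  also have "mcong (q j) (1 + of_int (q j) * X) 1" by (rule mcong_1_smult)
  finally show ?thesis using ca by (simp add: lev_def)
qed

lemma lead_exists: "A \<in> lev j \<Longrightarrow> \<exists>X. lead j A X"
proof -
  assume a: "A \<in> lev j"
  have "mcong (q j) (rep (Suc j) A) 1" using lev_rep[OF a] by simp
  then obtain C where "rep (Suc j) A = 1 + of_int (q j) * C" unfolding mcong_def by blast
  then have "lead j A C" using a by (simp add: lead_def lev_carrier)
  then show ?thesis ..
qed

lemma smult_cong_p: "mcong (int p) X Y \<Longrightarrow> mcong (q (Suc j)) (1 + of_int (q j) * X) (1 + of_int (q j) * Y)"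
proof -
  assume "mcong (int p) X Y"
  then have "mcong (q j * int p) (of_int (q j) * X) (of_int (q j) * Y)" by (rule mcong_smult)
  then have "mcong (q (Suc j)) (of_int (q j) * X) (of_int (q j) * Y)" by (simp add: mult.commute)
  then show ?thesis by (rule mcong_add[OF mcong_refl])
qed

lemma mcong_add_cancel: "mcong k (A + B) (A + C) \<Longrightarrow> mcong k B C"
proof -
  assume "mcong k (A + B) (A + C)"
  from mcong_diff[OF this mcong_refl[of k A]] show ?thesis by simp
qed

lemma lead_unique: "lead j A X \<Longrightarrow> lead j A Y \<Longrightarrow> mcong (int p) X Y"
proof -
  assume a: "lead j A X" and b: "lead j A Y"
  have "mcong (q (Suc j)) (1 + of_int (q j) * X) (1 + of_int (q j) * Y)"
    using mcong_trans[OF mcong_sym[OF a[unfolded lead_def, THEN conjunct2]] b[unfolded lead_def, THEN conjunct2]] .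
  then have "mcong (q (Suc j)) (of_int (q j) * X) (of_int (q j) * Y)" by (rule mcong_add_cancel)
  then have "mcong (q j * int p) (of_int (q j) * X) (of_int (q j) * Y)" by (simp add: mult.commute)
  then show ?thesis using q_pos[of j] by (rule_tac mcong_cancel[of "q j"]) auto
qed

lemma lead_cong: "lead j A X \<Longrightarrow> mcong (int p) X Y \<Longrightarrow> lead j A Y"
  unfolding lead_def using smult_cong_p mcong_trans by blast

lemma rep_lev_ne: "j \<le> n \<Longrightarrow> A \<in> lev j \<Longrightarrow> mcong (q j) (rep n A) 1" by (rule lev_rep)

lemma lead_mult: "1 \<le> j \<Longrightarrow> lead j A X \<Longrightarrow> lead j B Y \<Longrightarrow> lead j (A \<otimes>\<^bsub>G\<^esub> B) (X + Y)"
proof -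
  assume j: "1 \<le> j" and a: "lead j A X" and b: "lead j B Y"
  have c: "A \<in> carrier G" "B \<in> carrier G" using a b lead_carrier by auto
  have "mcong (q (Suc j)) (rep (Suc j) (A \<otimes>\<^bsub>G\<^esub> B)) (rep (Suc j) A * rep (Suc j) B)"
    by (rule rep_mult[OF c])
  also have "mcong (q (Suc j)) \<dots> ((1 + of_int (q j) * X) * (1 + of_int (q j) * Y))"
    using a b by (intro mcong_mult) (auto simp: lead_def)
  also have "(1 + of_int (q j) * X) * (1 + of_int (q j) * Y) =
      (1 + of_int (q j) * (X + Y)) + of_int (q (Suc j)) * (of_int (int p ^ (j - 1)) * (X * Y))"
  proof -
    have e: "q j * q j = q (Suc j) * int p ^ (j - 1)"
      using j by (simp add: power_add[symmetric] power_Suc[symmetric] del: power_Suc)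
    have "(1 + of_int (q j) * X) * (1 + of_int (q j) * Y) =
      (1 + of_int (q j) * (X + Y)) + of_int (q j * q j) * (X * Y)"
      by (cases X; cases Y) (simp add: algebra_simps of_int_m2)
    also have "\<dots> = (1 + of_int (q j) * (X + Y)) + of_int (q (Suc j)) * (of_int (int p ^ (j - 1)) * (X * Y))"
      unfolding e by (simp add: mult.assoc of_int_mult del: of_int_m2)
    finally show ?thesis .
  qed
  also have "mcong (q (Suc j)) \<dots> (1 + of_int (q j) * (X + Y))" by (rule mcong_add_smult)
  finally show ?thesis using mult_carrier[OF c] by (simp add: lead_def)
qed

lemma lead_one: "lead j \<one>\<^bsub>G\<^esub> 0"
proof -
  have e: "1 + of_int (q j) * 0 = (1::m2)" by simp
  show ?thesis unfolding lead_def e using one_carrier rep_one by blast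
qed

lemma one_lev: "\<one>\<^bsub>G\<^esub> \<in> lev j"
  unfolding lev_def using one_carrier rep_one by blast

lemma lev_subgroup: "subgroup (lev j) G"
proof (rule grp.subgroupI)
  show "lev j \<subseteq> carrier G" using lev_carrier by blast
  show "lev j \<noteq> {}" using one_lev by blast
  fix A B assume a: "A \<in> lev j" and b: "B \<in> lev j"
  have ca: "A \<in> carrier G" using a lev_carrier by blast
  have "mcong (q j) (rep j (inv\<^bsub>G\<^esub> A)) (adj (rep j A))" by (rule rep_inv[OF ca])
  also have "mcong (q j) \<dots> (adj 1)" using a by (intro mcong_adj) (simp add: lev_def)
  finally show "inv\<^bsub>G\<^esub> A \<in> lev j" using ca by (simp add: lev_def adj_one)
  have cb: "B \<in> carrier G" using b lev_carrier by blast
  have "mcong (q j) (rep j (A \<otimes>\<^bsub>G\<^esub> B)) (rep j A * rep j B)" by (rule rep_mult[OF ca cb])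
  also have "mcong (q j) \<dots> (1 * 1)" using a b by (intro mcong_mult) (auto simp: lev_def)
  finally show "A \<otimes>\<^bsub>G\<^esub> B \<in> lev j" using mult_carrier[OF ca cb] by (simp add: lev_def)
qed

lemma lev_inv_mult_iff:
  assumes "A \<in> carrier G" "B \<in> carrier G"
  shows "inv\<^bsub>G\<^esub> A \<otimes>\<^bsub>G\<^esub> B \<in> lev n \<longleftrightarrow> rep n A = rep n B"
proof
  have ic: "inv\<^bsub>G\<^esub> A \<in> carrier G" using assms by simp
  have r: "mcong (q n) (rep n (inv\<^bsub>G\<^esub> A \<otimes>\<^bsub>G\<^esub> B)) (adj (rep n A) * rep n B)"
    using mcong_trans[OF rep_mult[OF ic assms(2)] mcong_mult[OF rep_inv[OF assms(1)] mcong_refl]] .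
  {
    assume "inv\<^bsub>G\<^esub> A \<otimes>\<^bsub>G\<^esub> B \<in> lev n"
    then have "mcong (q n) (rep n (inv\<^bsub>G\<^esub> A \<otimes>\<^bsub>G\<^esub> B)) 1" by (simp add: lev_def)
    then have "mcong (q n) (adj (rep n A) * rep n B) 1"
      using mcong_trans[OF mcong_sym[OF r]] by blast
    then have m1: "mcong (q n) (rep n A * (adj (rep n A) * rep n B)) (rep n A * 1)"
      by (rule mcong_mult[OF mcong_refl])
    have eq: "rep n A * (adj (rep n A) * rep n B) = of_int (mdet (rep n A)) * rep n B"
      by (simp add: mult.assoc[symmetric] adj_mult)
    have m2: "mcong (q n) (of_int (mdet (rep n A)) * rep n B) (1 * rep n B)"
      by (rule mcong_mult[OF mcong_of_det[OF det_rep[OF assms(1)]] mcong_refl])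
    have "mcong (q n) (rep n A * 1) (1 * rep n B)"
      using mcong_trans[OF mcong_sym[OF m1[unfolded eq]] m2] .
    then have "mcong (q n) (rep n A) (rep n B)" by simp
    then show "rep n A = rep n B" using rep_eq_of_cong[OF assms] by simp
  }
  {
    assume e: "rep n A = rep n B"
    have "mcong (q n) (rep n (inv\<^bsub>G\<^esub> A \<otimes>\<^bsub>G\<^esub> B)) (of_int (mdet (rep n B)))"
      using r unfolding e adj_mult .
    then show "inv\<^bsub>G\<^esub> A \<otimes>\<^bsub>G\<^esub> B \<in> lev n"
      using mcong_of_det[OF det_rep[OF assms(2)]] mcong_trans mult_carrier[OF ic assms(2)]
      by (auto simp: lev_def)
  }
qed

lemma lead_zero_lev: "lead j A X \<Longrightarrow> mcong (int p) X 0 \<Longrightarrow> A \<in> lev (Suc j)"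
proof -
  assume "lead j A X" "mcong (int p) X 0"
  then have "lead j A 0" by (rule lead_cong)
  then show ?thesis unfolding lead_def lev_def by simp
qed

lemma lev_lead_zero: "A \<in> lev (Suc j) \<Longrightarrow> lead j A 0"
  unfolding lev_def lead_def by simp

lemma lead_inv: "1 \<le> j \<Longrightarrow> lead j A X \<Longrightarrow> lead j (inv\<^bsub>G\<^esub> A) (- X)"
proof -
  assume j: "1 \<le> j" and a: "lead j A X"
  have ca: "A \<in> carrier G" using a lead_carrier by blast
  have "inv\<^bsub>G\<^esub> A \<in> lev j" by (rule subgroup.m_inv_closed[OF lev_subgroup lead_lev[OF a]])
  then obtain Y where y: "lead j (inv\<^bsub>G\<^esub> A) Y" using lead_exists by blast
  have "lead j (inv\<^bsub>G\<^esub> A \<otimes>\<^bsub>G\<^esub> A) (Y + X)" by (rule lead_mult[OF j y a])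
  moreover have "inv\<^bsub>G\<^esub> A \<otimes>\<^bsub>G\<^esub> A = \<one>\<^bsub>G\<^esub>" by (rule grp.l_inv[OF ca])
  ultimately have l1: "lead j \<one>\<^bsub>G\<^esub> (Y + X)" by simp
  have "mcong (int p) (Y + X) 0" by (rule lead_unique[OF l1 lead_one])
  then have "mcong (int p) (Y + X - X) (0 - X)" by (rule mcong_diff) (rule mcong_refl)
  then have "mcong (int p) Y (- X)" by simp
  then show ?thesis by (rule lead_cong[OF y])
qed

lemma lead_via_lev: "lead j A X \<Longrightarrow> B \<in> carrier G \<Longrightarrow> inv\<^bsub>G\<^esub> A \<otimes>\<^bsub>G\<^esub> B \<in> lev (Suc j) \<Longrightarrow> 1 \<le> j \<Longrightarrow> lead j B X"
proof -
  assume a: "lead j A X" and b: "B \<in> carrier G" and l: "inv\<^bsub>G\<^esub> A \<otimes>\<^bsub>G\<^esub> B \<in> lev (Suc j)" and j: "1 \<le> j"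
  have ca: "A \<in> carrier G" using a lead_carrier by blast
  have "lead j (A \<otimes>\<^bsub>G\<^esub> (inv\<^bsub>G\<^esub> A \<otimes>\<^bsub>G\<^esub> B)) (X + 0)"
    by (rule lead_mult[OF j a lev_lead_zero[OF l]])
  moreover have "A \<otimes>\<^bsub>G\<^esub> (inv\<^bsub>G\<^esub> A \<otimes>\<^bsub>G\<^esub> B) = B" using ca b by (simp add: grp.m_assoc[symmetric])
  ultimately show ?thesis by simp
qed

lemma lead_trace: "lead j A X \<Longrightarrow> 1 \<le> j \<Longrightarrow> int p dvd mtr X"
proof -
  assume a: "lead j A X" and j: "1 \<le> j"
  have ca: "A \<in> carrier G" using a lead_carrier by blast
  have d1: "q (Suc j) dvd (mdet (rep (Suc j) A) - mdet (1 + of_int (q j) * X))"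
    using a by (intro mcong_det) (simp add: lead_def)
  have d2: "q (Suc j) dvd (mdet (rep (Suc j) A) - 1)" by (rule det_rep[OF ca])
  have "q (Suc j) dvd ((mdet (rep (Suc j) A) - 1) - (mdet (rep (Suc j) A) - mdet (1 + of_int (q j) * X)))"
    by (rule dvd_diff[OF d2 d1])
  then have d3: "q (Suc j) dvd (mdet (1 + of_int (q j) * X) - 1)" by simp
  have e: "mdet (1 + of_int (q j) * X) - 1 = q j * mtr X + q j * q j * mdet X"
    by (cases X) (simp add: mdet_def mtr_def algebra_simps m2_01 of_int_m2)
  have "q j * q j = int p ^ (j + j)" by (simp add: power_add)
  moreover have "q (Suc j) dvd int p ^ (j + j)" using j by (intro le_imp_power_dvd) simp
  ultimately have "q (Suc j) dvd q j * q j * mdet X" by simp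
  then have "q (Suc j) dvd q j * mtr X" using d3 unfolding e by (simp add: dvd_add_left_iff)
  then have "q j * int p dvd q j * mtr X" by (simp add: mult.commute)
  then show ?thesis using q_pos[of j] p_ge3 by simp
qed

end

lemma binom_m2: "\<exists>R. (1 + of_int s * T :: m2) ^ m = 1 + of_int (int m * s) * T
   + of_int (int (m choose 2) * s^2) * (T * T) + of_int (s^3) * R"
proof (induction m)
  case 0 show ?case by (rule exI[of _ 0]) (simp add: numeral_2_eq_2)
next
  case (Suc m)
  then obtain R where R: "(1 + of_int s * T :: m2) ^ m = 1 + of_int (int m * s) * T
   + of_int (int (m choose 2) * s^2) * (T * T) + of_int (s^3) * R" by blast
  have ch: "Suc m choose 2 = m + (m choose 2)"
    by (simp add: numeral_2_eq_2)
  have "(1 + of_int s * T :: m2) ^ Suc m = ((1 + of_int s * T :: m2) ^ m) * (1 + of_int s * T)"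
    by (rule power_Suc2)
  also have "\<dots> = 1 + of_int (int (Suc m) * s) * T
   + of_int (int (Suc m choose 2) * s^2) * (T * T)
   + of_int (s^3) * (R + of_int (int (m choose 2)) * (T * T * T) + of_int s * (R * T))"
    unfolding R ch by (cases T; cases R) (simp add: algebra_simps power2_eq_square power3_eq_cube of_int_m2)
  finally show ?case by blast
qed

lemma adj_add: "adj (A + B) = adj A + adj B" by (cases A; cases B) (simp add: adj_def)
lemma adj_smult: "adj (of_int k * A) = of_int k * adj A" by (cases A) (simp add: adj_def of_int_m2)

lemma mcong_mult_smult: "mcong k M 1 \<Longrightarrow> mcong (k * k') (M * (of_int k' * W)) (of_int k' * W)"
proof -
  assume "mcong k M 1"
  then obtain C where c: "M = 1 + of_int k * C" by (auto simp: mcong_def)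
  have "M * (of_int k' * W) = of_int k' * W + of_int (k * k') * (C * W)"
    unfolding c by (cases C; cases W) (simp add: algebra_simps of_int_m2)
  then show ?thesis by (simp only:) (rule mcong_add_smult)
qed

lemma comm_identity: "adj a * adj b * a * b = of_int (mdet a * mdet b) + adj a * adj b * (a * b - b * a)"
  by (cases a; cases b) (simp add: adj_def mdet_def algebra_simps of_int_m2)

lemma comm_identity2: "(1 + of_int k * (T::m2)) * (1 + of_int k * U) - (1 + of_int k * U) * (1 + of_int k * T)
   = of_int (k * k) * (T * U - U * T)"
  by (cases T; cases U) (simp add: algebra_simps of_int_m2)

context pp begin

definition emb :: "m2 \<Rightarrow> mat2" where "emb M = ofseq p (\<lambda>_. M)"

lemma lead_emb: "mdet M = 1 \<Longrightarrow> mcong (int p) M 1 \<Longrightarrow> mcong (q (Suc j)) M (1 + of_int (q j) * X) \<Longrightarrow>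
   lead j (emb M) X"
proof -
  assume d: "mdet M = 1" and m: "mcong (int p) M 1" and c: "mcong (q (Suc j)) M (1 + of_int (q j) * X)"
  have g: "good (\<lambda>_. M)" by (rule good_const[OF d m])
  have "mcong (q (Suc j)) (rep (Suc j) (emb M)) M" unfolding emb_def by (rule rep_ofseq_good[OF g])
  also note c
  finally show ?thesis unfolding lead_def emb_def using ofseq_carrier[OF g] by simp
qed

lemma lead_surj: "1 \<le> j \<Longrightarrow> int p dvd mtr X \<Longrightarrow> \<exists>A. lead j A X"
proof -
  assume j: "1 \<le> j" and t: "int p dvd mtr X"
  obtain a b c d where X: "X = M2 a b c d" by (cases X)
  have pq: "int p dvd q j" using j by (simp add: dvd_power)
  define E where "E = M2 1 (q j * (b - a)) 0 1"
  define F where "F = M2 1 0 (q j * (c + a)) 1"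
  define H where "H = M2 (1 + q j * a) (q j * a) (- (q j * a)) (1 - q j * a)"
  have eE: "E = 1 + of_int (q j) * M2 0 (b - a) 0 0" by (simp add: E_def of_int_m2 m2_01)
  have eF: "F = 1 + of_int (q j) * M2 0 0 (c + a) 0" by (simp add: F_def of_int_m2 m2_01)
  have eH: "H = 1 + of_int (q j) * M2 a a (- a) (- a)" by (simp add: H_def of_int_m2 m2_01 algebra_simps)
  have pE: "mcong (int p) E 1" unfolding eE by (rule mcong_dvd[OF mcong_1_smult pq])
  have pF: "mcong (int p) F 1" unfolding eF by (rule mcong_dvd[OF mcong_1_smult pq])
  have pH: "mcong (int p) H 1" unfolding eH by (rule mcong_dvd[OF mcong_1_smult pq])
  have dE: "mdet E = 1" by (simp add: E_def mdet_def)
  have lE: "lead j (emb E) (M2 0 (b - a) 0 0)"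
    by (rule lead_emb[OF dE pE]) (unfold eE, rule mcong_refl)
  have dF: "mdet F = 1" by (simp add: F_def mdet_def)
  have lF: "lead j (emb F) (M2 0 0 (c + a) 0)"
    by (rule lead_emb[OF dF pF]) (unfold eF, rule mcong_refl)
  have dH: "mdet H = 1" by (simp add: H_def mdet_def algebra_simps)
  have lH: "lead j (emb H) (M2 a a (- a) (- a))"
    by (rule lead_emb[OF dH pH]) (unfold eH, rule mcong_refl)
  have "lead j (emb E \<otimes>\<^bsub>G\<^esub> emb F \<otimes>\<^bsub>G\<^esub> emb H) (M2 0 (b - a) 0 0 + M2 0 0 (c + a) 0 + M2 a a (- a) (- a))"
    by (rule lead_mult[OF j lead_mult[OF j lE lF] lH])
  moreover have "mcong (int p) (M2 0 (b - a) 0 0 + M2 0 0 (c + a) 0 + M2 a a (- a) (- a)) X"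
  proof -
    have "int p dvd (a + d)" using t by (simp add: X mtr_def)
    then have "int p dvd (- a - d)" by (metis minus_add_distrib dvd_minus_iff diff_conv_add_uminus)
    then show ?thesis by (simp add: X mcong_entries)
  qed
  ultimately show ?thesis using lead_cong by blast
qed

lemma pow_carrier: "A \<in> carrier G \<Longrightarrow> A [^]\<^bsub>G\<^esub> (k::nat) \<in> carrier G" by simp

lemma lead_pow: "1 \<le> j \<Longrightarrow> lead j A X \<Longrightarrow> lead (Suc j) (A [^]\<^bsub>G\<^esub> p) X"
proof -
  assume j: "1 \<le> j" and a: "lead j A X"
  have ca: "A \<in> carrier G" by (rule lead_carrier[OF a])
  have "mcong (q j) (rep (Suc (Suc j)) A) 1" by (rule lev_rep[OF lead_lev[OF a]]) simp
  then obtain T where T: "rep (Suc (Suc j)) A = 1 + of_int (q j) * T" by (auto simp: mcong_def)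
  have "mcong (q (Suc j)) (rep (Suc (Suc j)) A) (1 + of_int (q j) * X)" by (rule lead_rep[OF a]) simp
  then have "mcong (q (Suc j)) (of_int (q j) * T) (of_int (q j) * X)"
    unfolding T by (rule mcong_add_cancel)
  then have "mcong (q j * int p) (of_int (q j) * T) (of_int (q j) * X)" by (simp add: mult.commute)
  then have TX: "mcong (int p) T X" using q_pos[of j] by (rule_tac mcong_cancel[of "q j"]) auto
  obtain R where R: "(1 + of_int (q j) * T :: m2) ^ p = 1 + of_int (int p * q j) * T
     + of_int (int (p choose 2) * (q j)^2) * (T * T) + of_int ((q j)^3) * R"
    using binom_m2 by blast
  have d1: "q (Suc (Suc j)) dvd int (p choose 2) * (q j)^2"
  proof -
    have "p dvd (p choose 2)" using prime_p p_ge3 by (intro dvd_choose_prime) auto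
    then have "int p dvd int (p choose 2)" by simp
    then have "int p * (q j)^2 dvd int (p choose 2) * (q j)^2" by simp
    moreover have "q (Suc (Suc j)) dvd int p * (q j)^2"
    proof -
      have "(q j)^2 = int p ^ (j * 2)" by (simp add: power_mult)
      then have e: "int p * (q j)^2 = int p ^ (1 + 2 * j)" by (simp add: mult.commute)
      have "q (Suc (Suc j)) dvd int p ^ (1 + 2 * j)" using j by (intro le_imp_power_dvd) simp
      then show ?thesis by (subst e)
    qed
    ultimately show ?thesis using dvd_trans by blast
  qed
  have d2: "q (Suc (Suc j)) dvd (q j)^3"
  proof -
    have "(q j)^3 = int p ^ (j * 3)" by (simp add: power_mult)
    then have e: "(q j)^3 = int p ^ (3 * j)" by (simp add: mult.commute)
    have "q (Suc (Suc j)) dvd int p ^ (3 * j)" using j by (intro le_imp_power_dvd) simp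
    then show ?thesis by (subst e)
  qed
  have "mcong (q (Suc (Suc j))) (rep (Suc (Suc j)) (A [^]\<^bsub>G\<^esub> p)) ((rep (Suc (Suc j)) A) ^ p)"
    by (rule rep_pow[OF ca])
  also have "(rep (Suc (Suc j)) A) ^ p = 1 + of_int (q (Suc j)) * T
     + of_int (int (p choose 2) * (q j)^2) * (T * T) + of_int ((q j)^3) * R"
    unfolding T R by simp
  also have "mcong (q (Suc (Suc j))) \<dots> (1 + of_int (q (Suc j)) * T)"
  proof -
    obtain u where u: "int (p choose 2) * (q j)^2 = q (Suc (Suc j)) * u" using d1 by (auto elim: dvdE)
    obtain v where v: "(q j)^3 = q (Suc (Suc j)) * v" using d2 by (auto elim: dvdE)
    have "1 + of_int (q (Suc j)) * T + of_int (int (p choose 2) * (q j)^2) * (T * T) + of_int ((q j)^3) * R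
      = 1 + of_int (q (Suc j)) * T + of_int (q (Suc (Suc j))) * (of_int u * (T * T) + of_int v * R)"
      unfolding u v by (simp only: of_int_mult mult.assoc distrib_left add.assoc)
    then show ?thesis by (simp only:) (rule mcong_add_smult)
  qed
  also have "mcong (q (Suc (Suc j))) (1 + of_int (q (Suc j)) * T) (1 + of_int (q (Suc j)) * X)"
    by (rule smult_cong_p[OF TX])
  finally show ?thesis unfolding lead_def using pow_carrier[OF ca] by simp
qed

definition comm :: "mat2 \<Rightarrow> mat2 \<Rightarrow> mat2" where
  "comm A B = inv\<^bsub>G\<^esub> A \<otimes>\<^bsub>G\<^esub> inv\<^bsub>G\<^esub> B \<otimes>\<^bsub>G\<^esub> A \<otimes>\<^bsub>G\<^esub> B"

lemma comm_carrier: "A \<in> carrier G \<Longrightarrow> B \<in> carrier G \<Longrightarrow> comm A B \<in> carrier G"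
  unfolding comm_def by simp

lemma lead1_split: "lead 1 A X \<Longrightarrow> \<exists>T. rep 3 A = 1 + of_int (int p) * T \<and> mcong (int p) T X"
proof -
  assume a: "lead 1 A X"
  have "mcong (q 1) (rep 3 A) 1" by (rule lev_rep[OF lead_lev[OF a]]) simp
  then obtain T where T: "rep 3 A = 1 + of_int (int p) * T" by (auto simp: mcong_def)
  have "mcong (q 2) (rep 3 A) (1 + of_int (q 1) * X)" using lead_rep[OF a, of 3] by (simp add: power2_eq_square)
  then have "mcong (q 2) (of_int (q 1) * T) (of_int (q 1) * X)"
    unfolding T by (simp add: mcong_add_cancel)
  then have "mcong (int p * int p) (of_int (int p) * T) (of_int (int p) * X)" by (simp add: power2_eq_square)
  then have "mcong (int p) T X" using p_ge3 by (rule_tac mcong_cancel[of "int p"]) auto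
  then show ?thesis using T by blast
qed

lemma lead_comm: "lead 1 A X \<Longrightarrow> lead 1 B Y \<Longrightarrow> lead 2 (comm A B) (X * Y - Y * X)"
proof -
  assume a: "lead 1 A X" and b: "lead 1 B Y"
  have ca: "A \<in> carrier G" and cb: "B \<in> carrier G" using a b lead_carrier by auto
  obtain T where T: "rep 3 A = 1 + of_int (int p) * T" "mcong (int p) T X" using lead1_split[OF a] by blast
  obtain U where U: "rep 3 B = 1 + of_int (int p) * U" "mcong (int p) U Y" using lead1_split[OF b] by blast
  define a' where "a' = rep 3 A"
  define b' where "b' = rep 3 B"
  have ia: "inv\<^bsub>G\<^esub> A \<in> carrier G" and ib: "inv\<^bsub>G\<^esub> B \<in> carrier G" using ca cb by auto
  have "mcong (q 3) (rep 3 (comm A B)) (rep 3 (inv\<^bsub>G\<^esub> A \<otimes>\<^bsub>G\<^esub> inv\<^bsub>G\<^esub> B \<otimes>\<^bsub>G\<^esub> A) * rep 3 B)"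
    unfolding comm_def by (rule rep_mult) (use ia ib ca cb in simp_all)
  also have "mcong (q 3) \<dots> (rep 3 (inv\<^bsub>G\<^esub> A) * rep 3 (inv\<^bsub>G\<^esub> B) * rep 3 A * rep 3 B)"
    by (rule mcong_mult[OF rep_mult3[OF ia ib ca] mcong_refl])
  also have "mcong (q 3) \<dots> (adj a' * adj b' * a' * b')"
    unfolding a'_def b'_def
    by (intro mcong_mult rep_inv ca cb mcong_refl)
  also have "adj a' * adj b' * a' * b' = of_int (mdet a' * mdet b') + adj a' * adj b' * (a' * b' - b' * a')"
    by (rule comm_identity)
  also have "a' * b' - b' * a' = of_int (q 2) * (T * U - U * T)"
    unfolding a'_def b'_def T(1) U(1) comm_identity2 by (simp add: power2_eq_square)
  also have "mcong (q 3) (of_int (mdet a' * mdet b') + adj a' * adj b' * (of_int (q 2) * (T * U - U * T)))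
     (1 + of_int (q 2) * (T * U - U * T))"
  proof (rule mcong_add)
    show "mcong (q 3) (of_int (mdet a' * mdet b')) 1"
      by (rule mcong_of_det) (unfold a'_def b'_def, intro dvd_det_mult det_rep ca cb)
    have "mcong (int p) (adj a' * adj b') (1 * 1)"
    proof (rule mcong_mult)
      show "mcong (int p) (adj a') 1" unfolding a'_def T(1) adj_add adj_smult adj_one by (rule mcong_1_smult)
      show "mcong (int p) (adj b') 1" unfolding b'_def U(1) adj_add adj_smult adj_one by (rule mcong_1_smult)
    qed
    then have "mcong (int p * q 2) (adj a' * adj b' * (of_int (q 2) * (T * U - U * T))) (of_int (q 2) * (T * U - U * T))"
      by (intro mcong_mult_smult) simp
    then show "mcong (q 3) (adj a' * adj b' * (of_int (q 2) * (T * U - U * T))) (of_int (q 2) * (T * U - U * T))"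
      by (simp add: power_Suc[symmetric] numeral_3_eq_3 numeral_2_eq_2 del: power_Suc)
  qed
  also have "mcong (q 3) (1 + of_int (q 2) * (T * U - U * T)) (1 + of_int (q 2) * (X * Y - Y * X))"
  proof -
    have "mcong (int p) (T * U - U * T) (X * Y - Y * X)"
      by (intro mcong_diff mcong_mult T(2) U(2))
    from smult_cong_p[OF this, of 2] show ?thesis by (simp add: numeral_3_eq_3 numeral_2_eq_2)
  qed
  finally show ?thesis unfolding lead_def using comm_carrier[OF ca cb]
    by (simp add: numeral_3_eq_3 numeral_2_eq_2)
qed

end

locale aut = pp +
  fixes \<sigma> :: "mat2 \<Rightarrow> mat2"
  assumes cont_aut: "continuous_aut p \<sigma>"
    and invol: "\<forall>g\<in>carrier (Sl21 p). \<sigma> (\<sigma> g) = g"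
    and nontriv: "\<exists>g\<in>carrier (Sl21 p). \<sigma> g \<noteq> g"
begin

lemma sigma_hom: "\<sigma> \<in> hom G G"
  using cont_aut by (simp add: continuous_aut_def iso_def)

sublocale h: group_hom G G \<sigma>
  by (simp add: group_hom_def group_hom_axioms_def group_G sigma_hom)

lemma sig_carrier: "A \<in> carrier G \<Longrightarrow> \<sigma> A \<in> carrier G"
  using sigma_hom by (rule hom_in_carrier)

lemma sig_cont: "\<exists>m. \<forall>g\<in>carrier G. \<forall>h\<in>carrier G. rep m g = rep m h \<longrightarrow> rep n (\<sigma> g) = rep n (\<sigma> h)"
  using cont_aut unfolding continuous_aut_def red_rep by blast

lemma sig_pow: "A \<in> carrier G \<Longrightarrow> \<sigma> (A [^]\<^bsub>G\<^esub> (k::nat)) = \<sigma> A [^]\<^bsub>G\<^esub> k"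
  by (rule h.hom_nat_pow)

lemma lev_mono: "i \<le> k \<Longrightarrow> lev k \<subseteq> lev i"
proof
  fix A assume ik: "i \<le> k" and A: "A \<in> lev k"
  have c: "A \<in> carrier G" using A lev_carrier by blast
  have "mcong (q i) (rep i A) (rep k A)" by (rule mcong_sym[OF rep_compat[OF c ik]])
  also have "mcong (q i) (rep k A) 1"
    using A by (rule_tac mcong_dvd[of "q k"]) (simp_all add: lev_def le_imp_power_dvd ik)
  finally show "A \<in> lev i" using c by (simp add: lev_def)
qed

lemma pow_lev: "1 \<le> j \<Longrightarrow> y \<in> lev j \<Longrightarrow> y [^]\<^bsub>G\<^esub> p \<in> lev (Suc j)"
proof -
  assume j: "1 \<le> j" and y: "y \<in> lev j"
  obtain X where "lead j y X" using lead_exists[OF y] by blast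
  then show ?thesis using lead_lev lead_pow[OF j] by blast
qed

inductive_set Qs :: "nat \<Rightarrow> mat2 set" for j where
  Q1: "\<one>\<^bsub>G\<^esub> \<in> Qs j"
| Q2: "w \<in> Qs j \<Longrightarrow> y \<in> lev j \<Longrightarrow> w \<otimes>\<^bsub>G\<^esub> y [^]\<^bsub>G\<^esub> p \<in> Qs j"

lemma Qs_lev: "w \<in> Qs j \<Longrightarrow> 1 \<le> j \<Longrightarrow> w \<in> lev (Suc j)"
proof (induction w rule: Qs.induct)
  case Q1 then show ?case using one_lev by blast
next
  case (Q2 w y)
  then show ?case using subgroup.m_closed[OF lev_subgroup] pow_lev by blast
qed

lemma approx:
  assumes j: "1 \<le> j" and x: "x \<in> lev (Suc j)"
  shows "Suc j \<le> m \<Longrightarrow> \<exists>w\<in>Qs j. inv\<^bsub>G\<^esub> w \<otimes>\<^bsub>G\<^esub> x \<in> lev m"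
proof (induction m rule: nat_induct_at_least)
  case base
  have "inv\<^bsub>G\<^esub> \<one>\<^bsub>G\<^esub> \<otimes>\<^bsub>G\<^esub> x = x" using x lev_carrier by simp
  then show ?case using Q1 x by metis
next
  case (Suc m)
  then obtain w where w: "w \<in> Qs j" "inv\<^bsub>G\<^esub> w \<otimes>\<^bsub>G\<^esub> x \<in> lev m" by blast
  have m1: "1 \<le> m" using Suc by simp
  obtain R where R: "lead m (inv\<^bsub>G\<^esub> w \<otimes>\<^bsub>G\<^esub> x) R" using lead_exists[OF w(2)] by blast
  have tr: "int p dvd mtr R" using lead_trace[OF R m1] .
  have mj: "1 \<le> m - 1" using Suc j by simp
  obtain y where y: "lead (m - 1) y R" using lead_surj[OF mj tr] by blast
  have yp: "lead m (y [^]\<^bsub>G\<^esub> p) R" using lead_pow[OF mj y] m1 by simp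
  have "j \<le> m - 1" using Suc by simp
  then have ylev: "y \<in> lev j" using lead_lev[OF y] lev_mono[of j "m - 1"] by blast
  have wc: "w \<in> carrier G" using Qs_lev[OF w(1) j] lev_carrier by blast
  have yc: "y [^]\<^bsub>G\<^esub> p \<in> carrier G" using yp lead_carrier by blast
  have xc: "x \<in> carrier G" using x lev_carrier by blast
  have "lead m (inv\<^bsub>G\<^esub> (y [^]\<^bsub>G\<^esub> p) \<otimes>\<^bsub>G\<^esub> (inv\<^bsub>G\<^esub> w \<otimes>\<^bsub>G\<^esub> x)) (- R + R)"
    by (rule lead_mult[OF m1 lead_inv[OF m1 yp] R])
  then have "inv\<^bsub>G\<^esub> (y [^]\<^bsub>G\<^esub> p) \<otimes>\<^bsub>G\<^esub> (inv\<^bsub>G\<^esub> w \<otimes>\<^bsub>G\<^esub> x) \<in> lev (Suc m)"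
    by (rule lead_zero_lev) simp
  moreover have "inv\<^bsub>G\<^esub> (w \<otimes>\<^bsub>G\<^esub> y [^]\<^bsub>G\<^esub> p) \<otimes>\<^bsub>G\<^esub> x
      = inv\<^bsub>G\<^esub> (y [^]\<^bsub>G\<^esub> p) \<otimes>\<^bsub>G\<^esub> (inv\<^bsub>G\<^esub> w \<otimes>\<^bsub>G\<^esub> x)"
    using wc yc xc by (simp add: grp.inv_mult_group grp.m_assoc)
  ultimately show ?case using Q2[OF w(1) ylev] by metis
qed

lemma sig_Qs: "w \<in> Qs j \<Longrightarrow> (\<And>y. y \<in> lev j \<Longrightarrow> \<sigma> y \<in> lev j) \<Longrightarrow> 1 \<le> j \<Longrightarrow> \<sigma> w \<in> Qs j"
proof (induction w rule: Qs.induct)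
  case Q1 then show ?case using Qs.Q1 by simp
next
  case (Q2 w y)
  have wc: "w \<in> carrier G" using Qs_lev[OF Q2.hyps(1) Q2.prems(2)] lev_carrier by blast
  have yc: "y \<in> carrier G" using Q2.hyps(2) lev_carrier by blast
  have "\<sigma> (w \<otimes>\<^bsub>G\<^esub> y [^]\<^bsub>G\<^esub> p) = \<sigma> w \<otimes>\<^bsub>G\<^esub> \<sigma> y [^]\<^bsub>G\<^esub> p"
    using wc yc by (simp add: sig_pow)
  then show ?case using Qs.Q2[OF Q2.IH[OF Q2.prems] Q2.prems(1)[OF Q2.hyps(2)]] by simp
qed

lemma sig_lev: "\<sigma> ` lev j \<subseteq> lev j"
proof (induction j)
  case 0 show ?case unfolding lev_0 using sig_carrier by blast
next
  case (Suc j)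
  show ?case
  proof (cases "j = 0")
    case True
    have "lev (Suc 0) = carrier G" using lev_1 by simp
    then show ?thesis unfolding True using sig_carrier by blast
  next
    case False
    then have j: "1 \<le> j" by simp
    have IH: "\<And>y. y \<in> lev j \<Longrightarrow> \<sigma> y \<in> lev j" using Suc.IH by blast
    show ?thesis
    proof
      fix z assume "z \<in> \<sigma> ` lev (Suc j)"
      then obtain x where x: "x \<in> lev (Suc j)" and z: "z = \<sigma> x" by blast
      have xc: "x \<in> carrier G" using x lev_carrier by blast
      obtain m0 where m0: "\<forall>g\<in>carrier G. \<forall>h\<in>carrier G. rep m0 g = rep m0 h \<longrightarrow>
          rep (Suc j) (\<sigma> g) = rep (Suc j) (\<sigma> h)" using sig_cont by blast
      define m where "m = max m0 (Suc j)"
      have "Suc j \<le> m" unfolding m_def by simp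
      then obtain w where w: "w \<in> Qs j" "inv\<^bsub>G\<^esub> w \<otimes>\<^bsub>G\<^esub> x \<in> lev m"
        using approx[OF j x, of m] by blast
      have wl: "w \<in> lev (Suc j)" by (rule Qs_lev[OF w(1) j])
      have wc: "w \<in> carrier G" using wl lev_carrier by blast
      have "m0 \<le> m" unfolding m_def by simp
      then have "inv\<^bsub>G\<^esub> w \<otimes>\<^bsub>G\<^esub> x \<in> lev m0" using w(2) lev_mono[of m0 m] by blast
      then have e0: "rep m0 w = rep m0 x" by (rule iffD1[OF lev_inv_mult_iff[OF wc xc]])
      have "rep (Suc j) (\<sigma> w) = rep (Suc j) (\<sigma> x)" using m0[rule_format, OF wc xc e0] .
      then have d: "inv\<^bsub>G\<^esub> (\<sigma> w) \<otimes>\<^bsub>G\<^esub> \<sigma> x \<in> lev (Suc j)"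
        by (rule iffD2[OF lev_inv_mult_iff[OF sig_carrier[OF wc] sig_carrier[OF xc]]])
      have sw: "\<sigma> w \<in> lev (Suc j)" using Qs_lev[OF sig_Qs[OF w(1) IH j] j] .
      have "\<sigma> w \<otimes>\<^bsub>G\<^esub> (inv\<^bsub>G\<^esub> (\<sigma> w) \<otimes>\<^bsub>G\<^esub> \<sigma> x) \<in> lev (Suc j)"
        by (rule subgroup.m_closed[OF lev_subgroup sw d])
      moreover have "\<sigma> w \<otimes>\<^bsub>G\<^esub> (inv\<^bsub>G\<^esub> (\<sigma> w) \<otimes>\<^bsub>G\<^esub> \<sigma> x) = \<sigma> x"
        using sig_carrier[OF wc] sig_carrier[OF xc] by (simp only: grp.m_assoc[symmetric] grp.r_inv grp.l_one grp.inv_closed)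
      ultimately show "z \<in> lev (Suc j)" using z by simp
    qed
  qed
qed

lemma sig_lev': "x \<in> lev j \<Longrightarrow> \<sigma> x \<in> lev j" using sig_lev by blast

end

lemma mtr_comm: "mtr (X * Y - Y * X) = 0"
  by (cases X; cases Y) (simp add: mtr_def)

lemma mtr_add: "mtr (X + Y) = mtr X + mtr Y" by (cases X; cases Y) (simp add: mtr_def)
lemma mtr_neg: "mtr (- X) = - mtr X" by (cases X) (simp add: mtr_def)
lemma mtr_smult: "mtr (of_int k * X) = k * mtr X" by (cases X) (simp add: mtr_def of_int_m2 algebra_simps)

context pp begin

lemma lead_pow_nat: "1 \<le> j \<Longrightarrow> lead j A X \<Longrightarrow> lead j (A [^]\<^bsub>G\<^esub> (k::nat)) (of_nat k * X)"
proof (induction k)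
  case 0 then show ?case using lead_one by simp
next
  case (Suc k)
  have "lead j (A [^]\<^bsub>G\<^esub> k \<otimes>\<^bsub>G\<^esub> A) (of_nat k * X + X)"
    by (rule lead_mult[OF Suc.prems(1) Suc.IH[OF Suc.prems] Suc.prems(2)])
  moreover have "of_nat k * X + X = of_nat (Suc k) * X" by (simp add: algebra_simps)
  ultimately show ?case by simp
qed

lemma two_cancel: "mcong (int p) (X + X) 0 \<Longrightarrow> mcong (int p) X 0"
proof -
  assume a: "mcong (int p) (X + X) 0"
  have pr: "prime (int p)" using prime_p by simp
  have n2: "\<not> int p dvd 2"
  proof
    assume "int p dvd 2"
    then have "int p \<le> 2" by (rule zdvd_imp_le) simp
    then show False using p_ge3 by simp
  qed
  have c: "int p dvd x" if h: "int p dvd (x + x - 0)" for x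
  proof -
    have "int p dvd 2 * x" using h by (simp only: mult_2 diff_0_right)
    then show ?thesis using prime_dvd_mult_iff[OF pr] n2 by blast
  qed
  obtain a1 a2 a3 a4 where X: "X = M2 a1 a2 a3 a4" by (cases X)
  have "int p dvd (a1 + a1 - 0) \<and> int p dvd (a2 + a2 - 0) \<and> int p dvd (a3 + a3 - 0) \<and> int p dvd (a4 + a4 - 0)"
    using a unfolding mcong_entries X by (simp only: m2_simps m2.sel m2_01_sel)
  then have "int p dvd a1 \<and> int p dvd a2 \<and> int p dvd a3 \<and> int p dvd a4" using c by blast
  then show ?thesis unfolding mcong_entries X by simp
qed

end

context aut begin

definition sx :: "m2 \<Rightarrow> m2" where
  "sx X = (SOME Y. \<forall>A. lead 1 A X \<longrightarrow> lead 1 (\<sigma> A) Y)"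

lemma s_spec: "int p dvd mtr X \<Longrightarrow> lead 1 A X \<Longrightarrow> lead 1 (\<sigma> A) (sx X)"
proof -
  assume t: "int p dvd mtr X" and a: "lead 1 A X"
  obtain A0 where A0: "lead 1 A0 X" using lead_surj[of 1 X] t by auto
  have c0: "A0 \<in> carrier G" using A0 lead_carrier by blast
  have "\<sigma> A0 \<in> lev 1" using sig_carrier[OF c0] lev_1 by simp
  then obtain Y0 where Y0: "lead 1 (\<sigma> A0) Y0" using lead_exists by blast
  have H: "\<forall>A. lead 1 A X \<longrightarrow> lead 1 (\<sigma> A) Y0"
  proof (intro allI impI)
    fix A assume a: "lead 1 A X"
    have c: "A \<in> carrier G" using a lead_carrier by blast
    have "lead 1 (inv\<^bsub>G\<^esub> A0 \<otimes>\<^bsub>G\<^esub> A) (- X + X)"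
      by (rule lead_mult[OF _ lead_inv[OF _ A0] a]) simp_all
    then have "inv\<^bsub>G\<^esub> A0 \<otimes>\<^bsub>G\<^esub> A \<in> lev 2" using lead_zero_lev[of 1] by (simp add: numeral_2_eq_2)
    then have "\<sigma> (inv\<^bsub>G\<^esub> A0 \<otimes>\<^bsub>G\<^esub> A) \<in> lev 2" by (rule sig_lev')
    moreover have "\<sigma> (inv\<^bsub>G\<^esub> A0 \<otimes>\<^bsub>G\<^esub> A) = inv\<^bsub>G\<^esub> (\<sigma> A0) \<otimes>\<^bsub>G\<^esub> \<sigma> A" using c0 c by simp
    ultimately have "inv\<^bsub>G\<^esub> (\<sigma> A0) \<otimes>\<^bsub>G\<^esub> \<sigma> A \<in> lev (Suc 1)" by (simp add: numeral_2_eq_2)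
    then show "lead 1 (\<sigma> A) Y0" by (rule lead_via_lev[OF Y0 sig_carrier[OF c]]) simp
  qed
  have "\<forall>A. lead 1 A X \<longrightarrow> lead 1 (\<sigma> A) (sx X)"
    unfolding sx_def by (rule someI[of _ Y0]) (rule H)
  then show ?thesis using a by blast
qed

lemma s_lead: "1 \<le> j \<Longrightarrow> \<forall>A X. lead j A X \<longrightarrow> lead j (\<sigma> A) (sx X)"
proof (induction j rule: nat_induct_at_least)
  case base
  show ?case using s_spec lead_trace by blast
next
  case (Suc j)
  show ?case
  proof (intro allI impI)
    fix A X assume a: "lead (Suc j) A X"
    have c: "A \<in> carrier G" using a lead_carrier by blast
    have t: "int p dvd mtr X" using lead_trace[OF a] by simp
    obtain B where B: "lead j B X" using lead_surj[OF Suc.hyps t] by blast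
    have cB: "B \<in> carrier G" using B lead_carrier by blast
    have Bp: "lead (Suc j) (B [^]\<^bsub>G\<^esub> p) X" by (rule lead_pow[OF Suc.hyps B])
    have sB: "lead j (\<sigma> B) (sx X)" using Suc.IH B by blast
    have sBp: "lead (Suc j) (\<sigma> (B [^]\<^bsub>G\<^esub> p)) (sx X)"
      using lead_pow[OF Suc.hyps sB] sig_pow[OF cB] by simp
    have j1: "1 \<le> Suc j" by simp
    have "lead (Suc j) (inv\<^bsub>G\<^esub> (B [^]\<^bsub>G\<^esub> p) \<otimes>\<^bsub>G\<^esub> A) (- X + X)"
      by (rule lead_mult[OF j1 lead_inv[OF j1 Bp] a])
    then have "inv\<^bsub>G\<^esub> (B [^]\<^bsub>G\<^esub> p) \<otimes>\<^bsub>G\<^esub> A \<in> lev (Suc (Suc j))" by (rule lead_zero_lev) simp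
    then have "\<sigma> (inv\<^bsub>G\<^esub> (B [^]\<^bsub>G\<^esub> p) \<otimes>\<^bsub>G\<^esub> A) \<in> lev (Suc (Suc j))" by (rule sig_lev')
    moreover have "\<sigma> (inv\<^bsub>G\<^esub> (B [^]\<^bsub>G\<^esub> p) \<otimes>\<^bsub>G\<^esub> A) = inv\<^bsub>G\<^esub> (\<sigma> (B [^]\<^bsub>G\<^esub> p)) \<otimes>\<^bsub>G\<^esub> \<sigma> A"
      using cB c by simp
    ultimately have "inv\<^bsub>G\<^esub> (\<sigma> (B [^]\<^bsub>G\<^esub> p)) \<otimes>\<^bsub>G\<^esub> \<sigma> A \<in> lev (Suc (Suc j))" by simp
    then show "lead (Suc j) (\<sigma> A) (sx X)" by (rule lead_via_lev[OF sBp sig_carrier[OF c] _ j1])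
  qed
qed

lemma s_lead': "1 \<le> j \<Longrightarrow> lead j A X \<Longrightarrow> lead j (\<sigma> A) (sx X)"
  using s_lead by blast

abbreviation tr0 :: "m2 \<Rightarrow> bool" where "tr0 X \<equiv> int p dvd mtr X"

lemma lead1_of: "tr0 X \<Longrightarrow> \<exists>A. lead 1 A X" using lead_surj by simp

lemma s_tr: "tr0 X \<Longrightarrow> tr0 (sx X)"
proof -
  assume t: "tr0 X"
  obtain A where "lead 1 A X" using lead1_of[OF t] by blast
  then show ?thesis using s_lead'[of 1] lead_trace by blast
qed

lemma s_add: "tr0 X \<Longrightarrow> tr0 Y \<Longrightarrow> mcong (int p) (sx (X + Y)) (sx X + sx Y)"
proof -
  assume tx: "tr0 X" and ty: "tr0 Y"
  obtain A where A: "lead 1 A X" using lead1_of[OF tx] by blast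
  obtain B where B: "lead 1 B Y" using lead1_of[OF ty] by blast
  have cA: "A \<in> carrier G" and cB: "B \<in> carrier G" using A B lead_carrier by auto
  have AB: "lead 1 (A \<otimes>\<^bsub>G\<^esub> B) (X + Y)" by (rule lead_mult[OF _ A B]) simp
  have l1: "lead 1 (\<sigma> (A \<otimes>\<^bsub>G\<^esub> B)) (sx (X + Y))" by (rule s_lead'[OF _ AB]) simp
  have "lead 1 (\<sigma> A \<otimes>\<^bsub>G\<^esub> \<sigma> B) (sx X + sx Y)"
    by (rule lead_mult[OF _ s_lead'[OF _ A] s_lead'[OF _ B]]) simp_all
  then have l2: "lead 1 (\<sigma> (A \<otimes>\<^bsub>G\<^esub> B)) (sx X + sx Y)" using cA cB by simp
  show ?thesis by (rule lead_unique[OF l1 l2])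
qed

lemma s_congr: "tr0 X \<Longrightarrow> mcong (int p) X Y \<Longrightarrow> mcong (int p) (sx X) (sx Y)"
proof -
  assume tx: "tr0 X" and xy: "mcong (int p) X Y"
  obtain A where A: "lead 1 A X" using lead1_of[OF tx] by blast
  have B: "lead 1 A Y" by (rule lead_cong[OF A xy])
  show ?thesis by (rule lead_unique[OF s_lead'[OF _ A] s_lead'[OF _ B]]) simp_all
qed

lemma s_s: "tr0 X \<Longrightarrow> mcong (int p) (sx (sx X)) X"
proof -
  assume tx: "tr0 X"
  obtain A where A: "lead 1 A X" using lead1_of[OF tx] by blast
  have c: "A \<in> carrier G" using A lead_carrier by blast
  have "lead 1 (\<sigma> (\<sigma> A)) (sx (sx X))" by (rule s_lead'[OF _ s_lead'[OF _ A]]) simp_all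
  then have "lead 1 A (sx (sx X))" using invol c by simp
  then show ?thesis by (rule lead_unique[OF _ A])
qed

lemma s_br: "tr0 X \<Longrightarrow> tr0 Y \<Longrightarrow> mcong (int p) (sx (X * Y - Y * X)) (sx X * sx Y - sx Y * sx X)"
proof -
  assume tx: "tr0 X" and ty: "tr0 Y"
  obtain A where A: "lead 1 A X" using lead1_of[OF tx] by blast
  obtain B where B: "lead 1 B Y" using lead1_of[OF ty] by blast
  have cA: "A \<in> carrier G" and cB: "B \<in> carrier G" using A B lead_carrier by auto
  have l1: "lead 2 (\<sigma> (comm A B)) (sx (X * Y - Y * X))" by (rule s_lead'[OF _ lead_comm[OF A B]]) simp
  have "lead 2 (comm (\<sigma> A) (\<sigma> B)) (sx X * sx Y - sx Y * sx X)"
    by (rule lead_comm[OF s_lead'[OF _ A] s_lead'[OF _ B]]) simp_all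
  moreover have "comm (\<sigma> A) (\<sigma> B) = \<sigma> (comm A B)" using cA cB by (simp add: comm_def)
  ultimately have l2: "lead 2 (\<sigma> (comm A B)) (sx X * sx Y - sx Y * sx X)" by simp
  show ?thesis by (rule lead_unique[OF l1 l2])
qed

lemma s_natmult: "tr0 X \<Longrightarrow> mcong (int p) (sx (of_nat k * X)) (of_nat k * sx X)"
proof -
  assume tx: "tr0 X"
  obtain A where A: "lead 1 A X" using lead1_of[OF tx] by blast
  have c: "A \<in> carrier G" using A lead_carrier by blast
  have l1: "lead 1 (\<sigma> (A [^]\<^bsub>G\<^esub> k)) (sx (of_nat k * X))"
    by (rule s_lead'[OF _ lead_pow_nat[OF _ A]]) simp_all
  have "lead 1 (\<sigma> A [^]\<^bsub>G\<^esub> k) (of_nat k * sx X)"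
    by (rule lead_pow_nat[OF _ s_lead'[OF _ A]]) simp_all
  then have l2: "lead 1 (\<sigma> (A [^]\<^bsub>G\<^esub> k)) (of_nat k * sx X)" using sig_pow[OF c] by simp
  show ?thesis by (rule lead_unique[OF l1 l2])
qed

lemma s_zero: "mcong (int p) (sx 0) 0"
proof -
  have "lead 1 (\<sigma> \<one>\<^bsub>G\<^esub>) (sx 0)" by (rule s_lead'[OF _ lead_one]) simp
  then have "lead 1 \<one>\<^bsub>G\<^esub> (sx 0)" by simp
  then show ?thesis by (rule lead_unique[OF _ lead_one])
qed

lemma s_neg: "tr0 X \<Longrightarrow> mcong (int p) (sx (- X)) (- sx X)"
proof -
  assume tx: "tr0 X"
  have tn: "tr0 (- X)" using tx by (simp add: mtr_neg)
  have "mcong (int p) (sx (X + - X)) (sx X + sx (- X))" by (rule s_add[OF tx tn])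
  then have "mcong (int p) (sx X + sx (- X)) (sx 0)" by (simp add: mcong_sym)
  then have "mcong (int p) (sx X + sx (- X)) 0" using s_zero mcong_trans by blast
  then have "mcong (int p) (- sx X + (sx X + sx (- X))) (- sx X + 0)" by (rule mcong_add[OF mcong_refl])
  then show ?thesis by (simp add: add.assoc[symmetric])
qed

lemma s_smult: "tr0 X \<Longrightarrow> mcong (int p) (sx (of_int k * X)) (of_int k * sx X)"
proof (cases k rule: int_cases)
  case (nonneg n)
  assume tx: "tr0 X"
  show ?thesis using s_natmult[OF tx, of n] by (simp add: nonneg)
next
  case (neg n)
  assume tx: "tr0 X"
  have t2: "tr0 (of_nat (Suc n) * X)" using tx mtr_smult[of "int (Suc n)" X] by simp
  have "mcong (int p) (sx (- (of_nat (Suc n) * X))) (- sx (of_nat (Suc n) * X))" by (rule s_neg[OF t2])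
  also have "mcong (int p) (- sx (of_nat (Suc n) * X)) (- (of_nat (Suc n) * sx X))"
    by (rule mcong_minus[OF s_natmult[OF tx]])
  finally have r: "mcong (int p) (sx (- (of_nat (Suc n) * X))) (- (of_nat (Suc n) * sx X))" .
  have e: "of_int k * Z = - (of_nat (Suc n) * Z)" for Z :: m2
    by (simp add: neg del: of_nat_Suc)
  show ?thesis unfolding e by (rule r)
qed

end

definition br :: "m2 \<Rightarrow> m2 \<Rightarrow> m2" where "br X Y = X * Y - Y * X"
definition tl :: "m2 \<Rightarrow> m2" where "tl X = M2 (e11 X) (e12 X) (e21 X) (- e11 X)"

lemma br_id: "br (tl X) (br (tl Y) (tl Z)) =
   of_int (2 * mtr (tl X * tl Y)) * tl Z - of_int (2 * mtr (tl X * tl Z)) * tl Y"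
  by (cases X; cases Y; cases Z) (simp add: br_def tl_def mtr_def of_int_m2 algebra_simps)

lemma mtr_cong: "mcong k A B \<Longrightarrow> k dvd (mtr A - mtr B)"
  unfolding mcong_entries mtr_def using dvd_add_diff by blast

lemma smult_cong: "k dvd (a - b) \<Longrightarrow> mcong k X Y \<Longrightarrow> mcong k (of_int a * X) (of_int b * Y)"
proof -
  assume ab: "k dvd (a - b)" and xy: "mcong k X Y"
  have "mcong k (of_int a) (of_int b :: m2)" using ab by (simp add: mcong_entries)
  then show ?thesis using mcong_mult[OF _ xy] by blast
qed

lemma br_cong: "mcong k A A' \<Longrightarrow> mcong k B B' \<Longrightarrow> mcong k (br A B) (br A' B')"
  unfolding br_def by (intro mcong_diff mcong_mult)

lemma mtr_br: "mtr (br X Y) = 0" unfolding br_def by (rule mtr_comm)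

context pp begin

lemma tl_cong: "int p dvd mtr X \<Longrightarrow> mcong (int p) X (tl X)"
proof -
  assume a: "int p dvd mtr X"
  obtain x1 x2 x3 x4 where X: "X = M2 x1 x2 x3 x4" by (cases X)
  have "x4 - - x1 = x1 + x4" by simp
  then show ?thesis using a unfolding X mcong_entries tl_def mtr_def m2.sel by (simp add: add.commute)
qed

lemma dvd_2diff: "(k::int) dvd (x - y) \<Longrightarrow> k dvd (2 * x - 2 * y)"
proof -
  assume "k dvd (x - y)"
  then have "k dvd 2 * (x - y)" by (rule dvd_mult)
  then show ?thesis by (simp only: right_diff_distrib)
qed

lemma br_id_mod:
  assumes "int p dvd mtr X" "int p dvd mtr Y" "int p dvd mtr Z"
  shows "mcong (int p) (br X (br Y Z)) (of_int (2 * mtr (X * Y)) * Z - of_int (2 * mtr (X * Z)) * Y)"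
proof -
  have cx: "mcong (int p) X (tl X)" and cy: "mcong (int p) Y (tl Y)" and cz: "mcong (int p) Z (tl Z)"
    using assms tl_cong by auto
  have "mcong (int p) (br X (br Y Z)) (br (tl X) (br (tl Y) (tl Z)))"
    by (intro br_cong cx cy cz)
  also have "br (tl X) (br (tl Y) (tl Z)) =
   of_int (2 * mtr (tl X * tl Y)) * tl Z - of_int (2 * mtr (tl X * tl Z)) * tl Y" by (rule br_id)
  also have "mcong (int p) \<dots> (of_int (2 * mtr (X * Y)) * Z - of_int (2 * mtr (X * Z)) * Y)"
  proof (rule mcong_diff)
    have "int p dvd (mtr (tl X * tl Y) - mtr (X * Y))"
      by (rule mtr_cong[OF mcong_mult[OF mcong_sym[OF cx] mcong_sym[OF cy]]])
    then have "int p dvd (2 * mtr (tl X * tl Y) - 2 * mtr (X * Y))" by (rule dvd_2diff)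
    then show "mcong (int p) (of_int (2 * mtr (tl X * tl Y)) * tl Z) (of_int (2 * mtr (X * Y)) * Z)"
      by (rule smult_cong[OF _ mcong_sym[OF cz]])
    have "int p dvd (mtr (tl X * tl Z) - mtr (X * Z))"
      by (rule mtr_cong[OF mcong_mult[OF mcong_sym[OF cx] mcong_sym[OF cz]]])
    then have "int p dvd (2 * mtr (tl X * tl Z) - 2 * mtr (X * Z))" by (rule dvd_2diff)
    then show "mcong (int p) (of_int (2 * mtr (tl X * tl Z)) * tl Y) (of_int (2 * mtr (X * Z)) * Y)"
      by (rule smult_cong[OF _ mcong_sym[OF cy]])
  qed
  finally show ?thesis .
qed

lemma prime_int: "prime (int p)" using prime_p by simp

lemma scalar_zero: "mcong (int p) (of_int k * Z) 0 \<Longrightarrow> \<not> mcong (int p) Z 0 \<Longrightarrow> int p dvd k"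
proof -
  assume a: "mcong (int p) (of_int k * Z) 0" and nz: "\<not> mcong (int p) Z 0"
  obtain z1 z2 z3 z4 where Z: "Z = M2 z1 z2 z3 z4" by (cases Z)
  have d: "int p dvd k * z1" "int p dvd k * z2" "int p dvd k * z3" "int p dvd k * z4"
    using a by (simp_all add: Z mcong_entries of_int_m2)
  have "\<not> (int p dvd z1 \<and> int p dvd z2 \<and> int p dvd z3 \<and> int p dvd z4)"
    using nz by (simp add: Z mcong_entries)
  then show ?thesis using d prime_dvd_mult_iff[OF prime_int] by blast
qed

lemma scalar_zero2: "int p dvd k \<Longrightarrow> mcong (int p) (of_int k * Z) 0"
proof -
  assume "int p dvd k"
  then have "mcong (int p) (of_int k) (0::m2)" by (simp add: mcong_entries)
  then show ?thesis using mcong_mult[OF _ mcong_refl[of _ Z]] by fastforce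
qed

lemma inv_mod: "\<not> int p dvd x \<Longrightarrow> \<exists>u. int p dvd (x * u - 1)"
proof -
  assume nd: "\<not> int p dvd x"
  have "coprime (int p) x" using prime_imp_coprime[OF prime_int nd] .
  then have g: "gcd x (int p) = 1" by (simp add: coprime_iff_gcd_eq_1 gcd.commute)
  obtain u v where "u * x + v * int p = gcd x (int p)" using bezout_int by blast
  then have "x * u - 1 = int p * (- v)" using g by (simp add: algebra_simps)
  then show ?thesis by (metis dvd_triv_left)
qed

lemma two_dvd_cancel: "int p dvd (2 * x) \<Longrightarrow> int p dvd x"
proof -
  assume a: "int p dvd (2 * x)"
  have n2: "\<not> int p dvd 2"
  proof
    assume "int p dvd 2"
    then have "int p \<le> 2" by (rule zdvd_imp_le) simp
    then show False using p_ge3 by simp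
  qed
  show ?thesis using a prime_dvd_mult_iff[OF prime_int] n2 by blast
qed

lemma mcong_tl_smult:
  assumes "int p dvd (a' - l * a)" "int p dvd (b' - l * b)" "int p dvd (c' - l * c)"
  shows "mcong (int p) (M2 a' b' c' (- a')) (of_int l * M2 a b c (- a))"
proof -
  have e: "- a' - l * - a = - (a' - l * a)" by (simp add: algebra_simps)
  have "int p dvd (- a' - l * - a)" unfolding e using assms(1) by (simp only: dvd_minus_iff)
  then show ?thesis using assms unfolding mcong_entries of_int_m2 m2_simps m2.sel by simp
qed

lemma cross_tl:
  assumes nz: "\<not> (int p dvd a \<and> int p dvd b \<and> int p dvd c)"
    and m1: "int p dvd (b * c' - b' * c)" and m2: "int p dvd (a * b' - a' * b)" and m3: "int p dvd (c * a' - a * c')"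
  shows "\<exists>l. mcong (int p) (M2 a' b' c' (- a')) (of_int l * M2 a b c (- a))"
proof -
  consider (A) "\<not> int p dvd a" | (B) "\<not> int p dvd b" | (C) "\<not> int p dvd c" using nz by blast
  then show ?thesis
  proof cases
    case A
    obtain u where u: "int p dvd (a * u - 1)" using inv_mod[OF A] by blast
    define l where "l = a' * u"
    have "int p dvd (a' - l * a)"
    proof -
      have "a' - l * a = - a' * (a * u - 1)" by (simp add: l_def algebra_simps)
      then show ?thesis using u by simp
    qed
    moreover have "int p dvd (b' - l * b)"
    proof -
      have "b' - l * b = - b' * (a * u - 1) + u * (a * b' - a' * b)" by (simp add: l_def algebra_simps)
      then show ?thesis using u m2 by simp
    qed
    moreover have "int p dvd (c' - l * c)"
    proof -
      have "c' - l * c = - c' * (a * u - 1) - u * (c * a' - a * c')" by (simp add: l_def algebra_simps)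
      then show ?thesis using u m3 by simp
    qed
    ultimately show ?thesis
      by (intro exI[of _ l] mcong_tl_smult)
  next
    case B
    obtain u where u: "int p dvd (b * u - 1)" using inv_mod[OF B] by blast
    define l where "l = b' * u"
    have "int p dvd (a' - l * a)"
    proof -
      have "a' - l * a = - a' * (b * u - 1) + u * (a' * b - a * b')" by (simp add: l_def algebra_simps)
      moreover have "int p dvd (a' * b - a * b')" using m2 by (simp add: dvd_diff_commute)
      ultimately show ?thesis using u by simp
    qed
    moreover have "int p dvd (b' - l * b)"
    proof -
      have "b' - l * b = - b' * (b * u - 1)" by (simp add: l_def algebra_simps)
      then show ?thesis using u by simp
    qed
    moreover have "int p dvd (c' - l * c)"
    proof -
      have "c' - l * c = - c' * (b * u - 1) + u * (b * c' - b' * c)" by (simp add: l_def algebra_simps)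
      then show ?thesis using u m1 by simp
    qed
    ultimately show ?thesis
      by (intro exI[of _ l] mcong_tl_smult)
  next
    case C
    obtain u where u: "int p dvd (c * u - 1)" using inv_mod[OF C] by blast
    define l where "l = c' * u"
    have "int p dvd (a' - l * a)"
    proof -
      have "a' - l * a = - a' * (c * u - 1) + u * (c * a' - a * c')" by (simp add: l_def algebra_simps)
      then show ?thesis using u m3 by simp
    qed
    moreover have "int p dvd (b' - l * b)"
    proof -
      have "b' - l * b = - b' * (c * u - 1) - u * (b * c' - b' * c)" by (simp add: l_def algebra_simps)
      then show ?thesis using u m1 by simp
    qed
    moreover have "int p dvd (c' - l * c)"
    proof -
      have "c' - l * c = - c' * (c * u - 1)" by (simp add: l_def algebra_simps)
      then show ?thesis using u by simp
    qed
    ultimately show ?thesis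
      by (intro exI[of _ l] mcong_tl_smult)
  qed
qed

end

lemma br_tl_entries: "br (tl A) (tl B) = M2 (e12 A * e21 B - e12 B * e21 A)
   (2 * (e11 A * e12 B - e11 B * e12 A)) (2 * (e21 A * e11 B - e11 A * e21 B))
   (- (e12 A * e21 B - e12 B * e21 A))"
  by (cases A; cases B) (simp add: br_def tl_def algebra_simps)

lemma br_neg_neg: "br (- Z) (br X (- Z)) = br Z (br X Z)"
  by (simp add: br_def algebra_simps)

lemma mtr_diff: "mtr (X - Y) = mtr X - mtr Y" by (cases X; cases Y) (simp add: mtr_def)

context pp begin

lemma cross:
  assumes tA: "int p dvd mtr A" and tB: "int p dvd mtr B" and nz: "\<not> mcong (int p) A 0"
    and c: "mcong (int p) (br A B) 0"
  shows "\<exists>l. mcong (int p) B (of_int l * A)"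
proof -
  have cA: "mcong (int p) A (tl A)" and cB: "mcong (int p) B (tl B)" using tA tB tl_cong by auto
  have "mcong (int p) (br (tl A) (tl B)) (br A B)" by (intro br_cong mcong_sym[OF cA] mcong_sym[OF cB])
  then have c': "mcong (int p) (br (tl A) (tl B)) 0" using c mcong_trans by blast
  define a where "a = e11 A"
  define b where "b = e12 A"
  define cc where "cc = e21 A"
  define a' where "a' = e11 B"
  define b' where "b' = e12 B"
  define c2 where "c2 = e21 B"
  have tlA: "tl A = M2 a b cc (- a)" by (simp add: tl_def a_def b_def cc_def)
  have tlB: "tl B = M2 a' b' c2 (- a')" by (simp add: tl_def a'_def b'_def c2_def)
  have e: "int p dvd (b * c2 - b' * cc)" "int p dvd (2 * (a * b' - a' * b))" "int p dvd (2 * (cc * a' - a * c2))"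
    using c' unfolding br_tl_entries mcong_entries a_def b_def cc_def a'_def b'_def c2_def by simp_all
  have nz': "\<not> (int p dvd a \<and> int p dvd b \<and> int p dvd cc)"
  proof
    assume "int p dvd a \<and> int p dvd b \<and> int p dvd cc"
    then have "mcong (int p) (tl A) 0" unfolding tlA mcong_entries by simp
    then have "mcong (int p) A 0" using cA mcong_trans by blast
    then show False using nz by simp
  qed
  obtain l where l: "mcong (int p) (M2 a' b' c2 (- a')) (of_int l * M2 a b cc (- a))"
    using cross_tl[OF nz' e(1) two_dvd_cancel[OF e(2)] two_dvd_cancel[OF e(3)]] by blast
  have "mcong (int p) B (of_int l * A)"
  proof -
    have "mcong (int p) B (tl B)" by (rule cB)
    also have "mcong (int p) (tl B) (of_int l * tl A)" unfolding tlA tlB by (rule l)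
    also have "mcong (int p) (of_int l * tl A) (of_int l * A)" by (rule mcong_mult[OF mcong_refl mcong_sym[OF cA]])
    finally show ?thesis .
  qed
  then show ?thesis by blast
qed

end

context aut begin

lemma s_diff: "tr0 X \<Longrightarrow> tr0 Y \<Longrightarrow> mcong (int p) (sx (X - Y)) (sx X - sx Y)"
proof -
  assume tx: "tr0 X" and ty: "tr0 Y"
  have tn: "tr0 (- Y)" using ty by (simp add: mtr_neg)
  have "mcong (int p) (sx (X + - Y)) (sx X + sx (- Y))" by (rule s_add[OF tx tn])
  also have "mcong (int p) (sx X + sx (- Y)) (sx X + - sx Y)" by (rule mcong_add[OF mcong_refl s_neg[OF ty]])
  finally show ?thesis by simp
qed

lemma s_br': "tr0 X \<Longrightarrow> tr0 Y \<Longrightarrow> mcong (int p) (sx (br X Y)) (br (sx X) (sx Y))"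
  unfolding br_def by (rule s_br)

lemma s_not_id: "\<exists>X. tr0 X \<and> \<not> mcong (int p) (sx X) X"
proof (rule ccontr)
  assume "\<not> (\<exists>X. tr0 X \<and> \<not> mcong (int p) (sx X) X)"
  then have sid: "\<And>X. tr0 X \<Longrightarrow> mcong (int p) (sx X) X" by blast
  have ls: "lead j (\<sigma> A) X" if "1 \<le> j" "lead j A X" for j A X
    using lead_cong[OF s_lead'[OF that] sid[OF lead_trace[OF that(2) that(1)]]] .
  obtain g where g: "g \<in> carrier G" "\<sigma> g \<noteq> g" using nontriv by blast
  define y where "y = inv\<^bsub>G\<^esub> g \<otimes>\<^bsub>G\<^esub> \<sigma> g"
  have sg: "\<sigma> g \<in> carrier G" using sig_carrier[OF g(1)] .
  have yc: "y \<in> carrier G" unfolding y_def using g(1) sg by simp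
  have sy: "\<sigma> y = inv\<^bsub>G\<^esub> y"
  proof -
    have "\<sigma> y = inv\<^bsub>G\<^esub> (\<sigma> g) \<otimes>\<^bsub>G\<^esub> g" unfolding y_def using g(1) sg invol by simp
    also have "\<dots> = inv\<^bsub>G\<^esub> y" unfolding y_def using g(1) sg by (simp add: grp.inv_mult_group)
    finally show ?thesis .
  qed
  have yne: "y \<noteq> \<one>\<^bsub>G\<^esub>"
  proof
    assume "y = \<one>\<^bsub>G\<^esub>"
    then have "g \<otimes>\<^bsub>G\<^esub> y = g" using g(1) by simp
    moreover have "g \<otimes>\<^bsub>G\<^esub> y = \<sigma> g" unfolding y_def using g(1) sg by (simp add: grp.m_assoc[symmetric])
    ultimately show False using g(2) by simp
  qed
  have "\<exists>n. y \<notin> lev n"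
  proof (rule ccontr)
    assume "\<not> (\<exists>n. y \<notin> lev n)"
    then have "\<And>n. inv\<^bsub>G\<^esub> \<one>\<^bsub>G\<^esub> \<otimes>\<^bsub>G\<^esub> y \<in> lev n" using yc by simp
    then have "\<And>n. rep n \<one>\<^bsub>G\<^esub> = rep n y" using lev_inv_mult_iff[OF one_carrier yc] by simp
    then have "\<one>\<^bsub>G\<^esub> = y" by (rule eq_by_rep)
    then show False using yne by simp
  qed
  then obtain n where n: "y \<notin> lev n" "\<And>m. m < n \<Longrightarrow> y \<in> lev m"
    using exists_least_iff[of "\<lambda>n. y \<notin> lev n"] by blast
  have "n \<noteq> 0"
  proof
    assume "n = 0" then have "y \<in> lev n" using yc lev_0 by simp
    then show False using n(1) by contradiction
  qed
  moreover have "n \<noteq> 1"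
  proof
    assume "n = 1" then have "y \<in> lev n" using yc lev_1 by simp
    then show False using n(1) by contradiction
  qed
  ultimately obtain k where k: "n = Suc k" "1 \<le> k"
    by (cases n) auto
  have yk: "y \<in> lev k" using n(2) k by simp
  obtain X where X: "lead k y X" using lead_exists[OF yk] by blast
  have "lead k (\<sigma> y) X" by (rule ls[OF k(2) X])
  then have l1: "lead k (inv\<^bsub>G\<^esub> y) X" using sy by simp
  have l2: "lead k (inv\<^bsub>G\<^esub> y) (- X)" by (rule lead_inv[OF k(2) X])
  have "mcong (int p) X (- X)" by (rule lead_unique[OF l1 l2])
  then have "mcong (int p) (X + X) (- X + X)" by (rule mcong_add[OF _ mcong_refl])
  then have "mcong (int p) X 0" by (rule_tac two_cancel) simp
  then have "y \<in> lev (Suc k)" by (rule lead_zero_lev[OF X])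
  then show False using n(1) k by simp
qed

lemma s_not_negid: "\<exists>X. tr0 X \<and> \<not> mcong (int p) (sx X) (- X)"
proof (rule ccontr)
  assume "\<not> (\<exists>X. tr0 X \<and> \<not> mcong (int p) (sx X) (- X))"
  then have sn: "\<And>X. tr0 X \<Longrightarrow> mcong (int p) (sx X) (- X)" by blast
  define e where "e = M2 0 1 0 0"
  define f where "f = M2 0 0 1 0"
  have te: "tr0 e" and tf: "tr0 f" by (simp_all add: e_def f_def mtr_def)
  have th: "tr0 (br e f)" by (simp add: mtr_br)
  have "mcong (int p) (sx (br e f)) (br (sx e) (sx f))" by (rule s_br'[OF te tf])
  also have "mcong (int p) (br (sx e) (sx f)) (br (- e) (- f))" by (rule br_cong[OF sn[OF te] sn[OF tf]])
  also have "br (- e) (- f) = br e f" by (simp add: br_def)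
  finally have a: "mcong (int p) (sx (br e f)) (br e f)" .
  have b: "mcong (int p) (sx (br e f)) (- br e f)" by (rule sn[OF th])
  have "mcong (int p) (br e f) (- br e f)" using mcong_trans[OF mcong_sym[OF a] b] .
  then have "mcong (int p) (br e f + br e f) (- br e f + br e f)" by (rule mcong_add[OF _ mcong_refl])
  then have "mcong (int p) (br e f) 0" by (rule_tac two_cancel) simp
  then have "int p dvd 1" by (simp add: br_def e_def f_def mcong_entries)
  then show False using p_ge3 by (simp add: zdvd_imp_le)
qed

end

lemma RR_lemma: "of_int a * Z - of_int b * X - (of_int a * (- Z) - of_int b * X) = of_int (2 * a) * (Z::m2)"
  by (cases Z; cases X) (simp add: of_int_m2 algebra_simps)

context aut begin

lemma s_of_diff: "tr0 A \<Longrightarrow> tr0 B \<Longrightarrow>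
   mcong (int p) (sx (of_int a * A - of_int b * B)) (of_int a * sx A - of_int b * sx B)"
proof -
  assume tA: "tr0 A" and tB: "tr0 B"
  have t1: "tr0 (of_int a * A)" using tA by (simp add: mtr_smult)
  have t2: "tr0 (of_int b * B)" using tB by (simp add: mtr_smult)
  have "mcong (int p) (sx (of_int a * A - of_int b * B)) (sx (of_int a * A) - sx (of_int b * B))"
    by (rule s_diff[OF t1 t2])
  also have "mcong (int p) \<dots> (of_int a * sx A - of_int b * sx B)"
    by (rule mcong_diff[OF s_smult[OF tA] s_smult[OF tB]])
  finally show ?thesis .
qed

lemma fixed_line:
  assumes t0: "tr0 X0" and nz0: "\<not> mcong (int p) X0 0" and f0: "mcong (int p) (sx X0) X0"
    and tW: "tr0 W" and fW: "mcong (int p) (sx W) W"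
  shows "\<exists>l. mcong (int p) W (of_int l * X0)"
proof -
  obtain v where v: "tr0 v" "\<not> mcong (int p) (sx v) v" using s_not_id by blast
  define Z where "Z = v - sx v"
  have tZ: "tr0 Z" unfolding Z_def using v(1) s_tr[OF v(1)] by (simp add: mtr_diff)
  have nzZ: "\<not> mcong (int p) Z 0"
  proof
    assume "mcong (int p) Z 0"
    then have "mcong (int p) (Z + sx v) (0 + sx v)" by (rule mcong_add[OF _ mcong_refl])
    then have "mcong (int p) v (sx v)" by (simp add: Z_def)
    then show False using v(2) mcong_sym by blast
  qed
  have sZ: "mcong (int p) (sx Z) (- Z)"
  proof -
    have "mcong (int p) (sx Z) (sx v - sx (sx v))" unfolding Z_def by (rule s_diff[OF v(1) s_tr[OF v(1)]])
    also have "mcong (int p) \<dots> (sx v - v)" by (rule mcong_diff[OF mcong_refl s_s[OF v(1)]])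
    also have "sx v - v = - Z" by (simp add: Z_def)
    finally show ?thesis .
  qed
  have orth: "int p dvd mtr (Z * X)" if tX: "tr0 X" and fX: "mcong (int p) (sx X) X" for X
  proof -
    define L where "L = br Z (br X Z)"
    define R where "R = of_int (2 * mtr (Z * X)) * Z - of_int (2 * mtr (Z * Z)) * X"
    define R' where "R' = of_int (2 * mtr (Z * X)) * (- Z) - of_int (2 * mtr (Z * Z)) * X"
    have tXZ: "tr0 (br X Z)" by (simp add: mtr_br)
    have tL: "tr0 L" by (simp add: L_def mtr_br)
    have LR: "mcong (int p) L R" unfolding L_def R_def by (rule br_id_mod[OF tZ tX tZ])
    have "mtr R = 2 * mtr (Z * X) * mtr Z - 2 * mtr (Z * Z) * mtr X"
      unfolding R_def by (simp only: mtr_diff mtr_smult)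
    then have tR: "tr0 R" using dvd_diff[OF dvd_mult[OF tZ] dvd_mult[OF tX]] by simp
    have "mcong (int p) (sx L) (br (sx Z) (sx (br X Z)))" unfolding L_def by (rule s_br'[OF tZ tXZ])
    also have "mcong (int p) \<dots> (br (- Z) (br X (- Z)))"
      by (rule br_cong[OF sZ mcong_trans[OF s_br'[OF tX tZ] br_cong[OF fX sZ]]])
    also have "br (- Z) (br X (- Z)) = L" unfolding L_def by (rule br_neg_neg)
    finally have sL: "mcong (int p) (sx L) L" .
    have "mcong (int p) (sx R) (of_int (2 * mtr (Z * X)) * sx Z - of_int (2 * mtr (Z * Z)) * sx X)"
      unfolding R_def by (rule s_of_diff[OF tZ tX])
    also have "mcong (int p) \<dots> R'" unfolding R'_def
      by (rule mcong_diff[OF mcong_mult[OF mcong_refl sZ] mcong_mult[OF mcong_refl fX]])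
    finally have sR: "mcong (int p) (sx R) R'" .
    have "mcong (int p) R L" by (rule mcong_sym[OF LR])
    also have "mcong (int p) L (sx L)" by (rule mcong_sym[OF sL])
    also have "mcong (int p) (sx L) (sx R)" by (rule s_congr[OF tL LR])
    also note sR
    finally have RR: "mcong (int p) R R'" .
    have "mcong (int p) (R - R') (R' - R')" by (rule mcong_diff[OF RR mcong_refl])
    moreover have "R - R' = of_int (2 * (2 * mtr (Z * X))) * Z"
      unfolding R_def R'_def by (rule RR_lemma)
    ultimately have "mcong (int p) (of_int (2 * (2 * mtr (Z * X))) * Z) 0" by simp
    then have "int p dvd 2 * (2 * mtr (Z * X))" by (rule scalar_zero[OF _ nzZ])
    then show ?thesis by (rule two_dvd_cancel[OF two_dvd_cancel])
  qed
  define U where "U = br X0 W"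
  have tU: "tr0 U" by (simp add: U_def mtr_br)
  have sU: "mcong (int p) (sx U) U"
  proof -
    have "mcong (int p) (sx U) (br (sx X0) (sx W))" unfolding U_def by (rule s_br'[OF t0 tW])
    also have "mcong (int p) \<dots> U" unfolding U_def by (rule br_cong[OF f0 fW])
    finally show ?thesis .
  qed
  have "mcong (int p) (br Z U) (of_int (2 * mtr (Z * X0)) * W - of_int (2 * mtr (Z * W)) * X0)"
    unfolding U_def by (rule br_id_mod[OF tZ t0 tW])
  also have "mcong (int p) \<dots> (0 - 0)"
    by (rule mcong_diff; rule scalar_zero2; rule dvd_mult; rule orth) (use t0 f0 tW fW in auto)
  finally have "mcong (int p) (br Z U) 0" by simp
  then obtain mu where mu: "mcong (int p) U (of_int mu * Z)" using cross[OF tZ tU nzZ] by blast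
  have "mcong (int p) U (sx U)" by (rule mcong_sym[OF sU])
  also have "mcong (int p) (sx U) (sx (of_int mu * Z))" by (rule s_congr[OF tU mu])
  also have "mcong (int p) (sx (of_int mu * Z)) (of_int mu * sx Z)" by (rule s_smult[OF tZ])
  also have "mcong (int p) (of_int mu * sx Z) (of_int mu * (- Z))" by (rule mcong_mult[OF mcong_refl sZ])
  also have "of_int mu * (- Z) = - (of_int mu * Z)" by simp
  also have "mcong (int p) (- (of_int mu * Z)) (- U)" by (rule mcong_minus[OF mcong_sym[OF mu]])
  finally have "mcong (int p) U (- U)" .
  then have "mcong (int p) (U + U) (- U + U)" by (rule mcong_add[OF _ mcong_refl])
  then have "mcong (int p) U 0" by (rule_tac two_cancel) simp
  then have "mcong (int p) (br X0 W) 0" by (simp add: U_def)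
  then show ?thesis using cross[OF t0 tW nz0] by blast
qed

end

lemma two_h_id: "of_int 2 * (X + of_int h * (- X + S)) = X + S + of_int (2 * h - 1) * (S - (X::m2))"
  by (cases X; cases S) (simp add: of_int_m2 algebra_simps)

lemma half_id: "- (of_int h * Z) + Z + - (of_int h * Z) = - (of_int (2 * h - 1) * (Z::m2))"
  by (cases Z) (simp add: of_int_m2 algebra_simps)

context pp begin

definition h2 :: int where "h2 = (int p + 1) div 2"

lemma h2_prop: "2 * h2 - 1 = int p"
proof -
  have "even (int p + 1)" using odd_p by simp
  then have "2 * ((int p + 1) div 2) = int p + 1" by (rule dvd_mult_div_cancel)
  then show ?thesis unfolding h2_def by simp
qed

lemma rep_eq_down: "A \<in> carrier G \<Longrightarrow> B \<in> carrier G \<Longrightarrow> n \<le> m \<Longrightarrow> rep m A = rep m B \<Longrightarrow> rep n A = rep n B"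
proof -
  assume a: "A \<in> carrier G" and b: "B \<in> carrier G" and nm: "n \<le> m" and e: "rep m A = rep m B"
  have "mcong (q n) (rep n A) (rep m A)" by (rule mcong_sym[OF rep_compat[OF a nm]])
  also have "mcong (q n) (rep m A) (rep n B)" unfolding e by (rule rep_compat[OF b nm])
  finally show ?thesis by (rule rep_eq_of_cong[OF a b])
qed

end

context aut begin

lemma fix_step:
  assumes k: "1 \<le> k" and y: "y \<in> carrier G" and Z: "lead k (inv\<^bsub>G\<^esub> y \<otimes>\<^bsub>G\<^esub> \<sigma> y) Z"
  shows "\<exists>w. lead k w (of_int h2 * Z) \<and> inv\<^bsub>G\<^esub> (y \<otimes>\<^bsub>G\<^esub> w) \<otimes>\<^bsub>G\<^esub> \<sigma> (y \<otimes>\<^bsub>G\<^esub> w) \<in> lev (Suc k)"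
proof -
  define z where "z = inv\<^bsub>G\<^esub> y \<otimes>\<^bsub>G\<^esub> \<sigma> y"
  have sy: "\<sigma> y \<in> carrier G" by (rule sig_carrier[OF y])
  have zc: "z \<in> carrier G" unfolding z_def using y sy by simp
  have sz: "\<sigma> z = inv\<^bsub>G\<^esub> z"
  proof -
    have "\<sigma> z = inv\<^bsub>G\<^esub> (\<sigma> y) \<otimes>\<^bsub>G\<^esub> y" unfolding z_def using y sy invol by simp
    also have "\<dots> = inv\<^bsub>G\<^esub> z" unfolding z_def using y sy by (simp add: grp.inv_mult_group)
    finally show ?thesis .
  qed
  have Zl: "lead k z Z" using Z unfolding z_def .
  have tZ: "tr0 Z" by (rule lead_trace[OF Zl k])
  have "lead k (\<sigma> z) (sx Z)" by (rule s_lead'[OF k Zl])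
  then have l1: "lead k (inv\<^bsub>G\<^esub> z) (sx Z)" using sz by simp
  have sZ: "mcong (int p) (sx Z) (- Z)" by (rule lead_unique[OF l1 lead_inv[OF k Zl]])
  define W where "W = of_int h2 * Z"
  have tW: "tr0 W" unfolding W_def using tZ by (simp add: mtr_smult)
  obtain w where w: "lead k w W" using lead_surj[OF k tW] by blast
  have wc: "w \<in> carrier G" by (rule lead_carrier[OF w])
  have swc: "\<sigma> w \<in> carrier G" by (rule sig_carrier[OF wc])
  have sW: "mcong (int p) (sx W) (- W)"
  proof -
    have "mcong (int p) (sx W) (of_int h2 * sx Z)" unfolding W_def by (rule s_smult[OF tZ])
    also have "mcong (int p) \<dots> (of_int h2 * (- Z))" by (rule mcong_mult[OF mcong_refl sZ])
    also have "of_int h2 * (- Z) = - W" by (simp add: W_def)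
    finally show ?thesis .
  qed
  have "lead k (inv\<^bsub>G\<^esub> w \<otimes>\<^bsub>G\<^esub> z \<otimes>\<^bsub>G\<^esub> \<sigma> w) (- W + Z + sx W)"
    by (rule lead_mult[OF k lead_mult[OF k lead_inv[OF k w] Zl] s_lead'[OF k w]])
  moreover have "mcong (int p) (- W + Z + sx W) 0"
  proof -
    have "mcong (int p) (- W + Z + sx W) (- W + Z + - W)" by (rule mcong_add[OF mcong_refl sW])
    also have "- W + Z + - W = - (of_int (int p) * Z)" unfolding W_def half_id h2_prop ..
    also have "mcong (int p) (- (of_int (int p) * Z)) 0" by (simp add: mcong_entries of_int_m2 del: of_int_of_nat_eq)
      (cases Z, simp)
    finally show ?thesis .
  qed
  ultimately have "inv\<^bsub>G\<^esub> w \<otimes>\<^bsub>G\<^esub> z \<otimes>\<^bsub>G\<^esub> \<sigma> w \<in> lev (Suc k)" by (rule lead_zero_lev)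
  moreover have "inv\<^bsub>G\<^esub> (y \<otimes>\<^bsub>G\<^esub> w) \<otimes>\<^bsub>G\<^esub> \<sigma> (y \<otimes>\<^bsub>G\<^esub> w) = inv\<^bsub>G\<^esub> w \<otimes>\<^bsub>G\<^esub> z \<otimes>\<^bsub>G\<^esub> \<sigma> w"
    unfolding z_def using y wc sy swc by (simp add: grp.inv_mult_group grp.m_assoc)
  ultimately have "inv\<^bsub>G\<^esub> (y \<otimes>\<^bsub>G\<^esub> w) \<otimes>\<^bsub>G\<^esub> \<sigma> (y \<otimes>\<^bsub>G\<^esub> w) \<in> lev (Suc k)" by simp
  moreover have "lead k w (of_int h2 * Z)" using w unfolding W_def .
  ultimately show ?thesis by blast
qed

definition nxt :: "nat \<Rightarrow> mat2 \<Rightarrow> mat2" where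
  "nxt j y = y \<otimes>\<^bsub>G\<^esub> (SOME w. w \<in> lev j \<and> inv\<^bsub>G\<^esub> (y \<otimes>\<^bsub>G\<^esub> w) \<otimes>\<^bsub>G\<^esub> \<sigma> (y \<otimes>\<^bsub>G\<^esub> w) \<in> lev (Suc j))"

lemma nxt_prop:
  assumes j: "1 \<le> j" and y: "y \<in> carrier G" and l: "inv\<^bsub>G\<^esub> y \<otimes>\<^bsub>G\<^esub> \<sigma> y \<in> lev j"
  shows "nxt j y \<in> carrier G" "inv\<^bsub>G\<^esub> (nxt j y) \<otimes>\<^bsub>G\<^esub> \<sigma> (nxt j y) \<in> lev (Suc j)"
    "rep j (nxt j y) = rep j y"
proof -
  obtain Z where Z: "lead j (inv\<^bsub>G\<^esub> y \<otimes>\<^bsub>G\<^esub> \<sigma> y) Z" using lead_exists[OF l] by blast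
  obtain w0 where w0: "lead j w0 (of_int h2 * Z)" "inv\<^bsub>G\<^esub> (y \<otimes>\<^bsub>G\<^esub> w0) \<otimes>\<^bsub>G\<^esub> \<sigma> (y \<otimes>\<^bsub>G\<^esub> w0) \<in> lev (Suc j)"
    using fix_step[OF j y Z] by blast
  have ex: "\<exists>w. w \<in> lev j \<and> inv\<^bsub>G\<^esub> (y \<otimes>\<^bsub>G\<^esub> w) \<otimes>\<^bsub>G\<^esub> \<sigma> (y \<otimes>\<^bsub>G\<^esub> w) \<in> lev (Suc j)"
    using w0 lead_lev by blast
  define w where "w = (SOME w. w \<in> lev j \<and> inv\<^bsub>G\<^esub> (y \<otimes>\<^bsub>G\<^esub> w) \<otimes>\<^bsub>G\<^esub> \<sigma> (y \<otimes>\<^bsub>G\<^esub> w) \<in> lev (Suc j))"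
  have w: "w \<in> lev j" "inv\<^bsub>G\<^esub> (y \<otimes>\<^bsub>G\<^esub> w) \<otimes>\<^bsub>G\<^esub> \<sigma> (y \<otimes>\<^bsub>G\<^esub> w) \<in> lev (Suc j)"
    using someI_ex[OF ex] unfolding w_def by blast+
  have nw: "nxt j y = y \<otimes>\<^bsub>G\<^esub> w" unfolding nxt_def w_def ..
  have wc: "w \<in> carrier G" using w(1) lev_carrier by blast
  show "nxt j y \<in> carrier G" unfolding nw using y wc by simp
  show "inv\<^bsub>G\<^esub> (nxt j y) \<otimes>\<^bsub>G\<^esub> \<sigma> (nxt j y) \<in> lev (Suc j)" unfolding nw by (rule w(2))
  have "inv\<^bsub>G\<^esub> y \<otimes>\<^bsub>G\<^esub> (y \<otimes>\<^bsub>G\<^esub> w) = w" using y wc by (simp add: grp.m_assoc[symmetric])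
  then have "inv\<^bsub>G\<^esub> y \<otimes>\<^bsub>G\<^esub> nxt j y \<in> lev j" unfolding nw using w(1) by simp
  then show "rep j (nxt j y) = rep j y"
    using lev_inv_mult_iff[OF y] y wc nw by (metis grp.m_closed)
qed

primrec yseq :: "mat2 \<Rightarrow> nat \<Rightarrow> mat2" where
  "yseq y0 0 = y0"
| "yseq y0 (Suc k) = nxt (Suc (Suc k)) (yseq y0 k)"

lemma yseq_inv:
  assumes y0: "y0 \<in> carrier G" "inv\<^bsub>G\<^esub> y0 \<otimes>\<^bsub>G\<^esub> \<sigma> y0 \<in> lev 2"
  shows "yseq y0 k \<in> carrier G \<and> inv\<^bsub>G\<^esub> (yseq y0 k) \<otimes>\<^bsub>G\<^esub> \<sigma> (yseq y0 k) \<in> lev (Suc (Suc k))"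
proof (induction k)
  case 0 then show ?case using y0 by (simp add: numeral_2_eq_2)
next
  case (Suc k)
  have j: "1 \<le> Suc (Suc k)" by simp
  show ?case using nxt_prop(1,2)[OF j conjunct1[OF Suc] conjunct2[OF Suc]] by simp
qed

lemma yseq_step:
  assumes y0: "y0 \<in> carrier G" "inv\<^bsub>G\<^esub> y0 \<otimes>\<^bsub>G\<^esub> \<sigma> y0 \<in> lev 2"
  shows "rep (Suc (Suc k)) (yseq y0 (Suc k)) = rep (Suc (Suc k)) (yseq y0 k)"
proof -
  have j: "1 \<le> Suc (Suc k)" by simp
  note I = yseq_inv[OF y0, of k]
  show ?thesis using nxt_prop(3)[OF j conjunct1[OF I] conjunct2[OF I]] by simp
qed

lemma yseq_stable:
  assumes y0: "y0 \<in> carrier G" "inv\<^bsub>G\<^esub> y0 \<otimes>\<^bsub>G\<^esub> \<sigma> y0 \<in> lev 2"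
  shows "n \<le> m \<Longrightarrow> rep n (yseq y0 m) = rep n (yseq y0 n)"
proof (induction m rule: nat_induct_at_least)
  case base then show ?case by simp
next
  case (Suc m)
  have c1: "yseq y0 (Suc m) \<in> carrier G" and c2: "yseq y0 m \<in> carrier G"
    using yseq_inv[OF y0] by blast+
  have "rep n (yseq y0 (Suc m)) = rep n (yseq y0 m)"
    by (rule rep_eq_down[OF c1 c2 _ yseq_step[OF y0]]) (use Suc in simp)
  then show ?case using Suc by simp
qed

lemma yseq_stable0:
  assumes y0: "y0 \<in> carrier G" "inv\<^bsub>G\<^esub> y0 \<otimes>\<^bsub>G\<^esub> \<sigma> y0 \<in> lev 2"
  shows "rep 2 (yseq y0 k) = rep 2 y0"
proof (induction k)
  case 0 then show ?case by simp
next
  case (Suc k)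
  have c1: "yseq y0 (Suc k) \<in> carrier G" and c2: "yseq y0 k \<in> carrier G"
    using yseq_inv[OF y0] by blast+
  have "rep 2 (yseq y0 (Suc k)) = rep 2 (yseq y0 k)"
    by (rule rep_eq_down[OF c1 c2 _ yseq_step[OF y0]]) simp
  then show ?case using Suc by simp
qed

lemma fixed_limit:
  assumes y0: "y0 \<in> carrier G" "inv\<^bsub>G\<^esub> y0 \<otimes>\<^bsub>G\<^esub> \<sigma> y0 \<in> lev 2"
  shows "\<exists>t. t \<in> carrier G \<and> \<sigma> t = t \<and> inv\<^bsub>G\<^esub> y0 \<otimes>\<^bsub>G\<^esub> t \<in> lev 2"
proof -
  define F where "F n = rep n (yseq y0 n)" for n
  have yc: "yseq y0 k \<in> carrier G" for k using yseq_inv[OF y0] by blast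
  have g: "good F"
    unfolding good_def
  proof (intro conjI allI)
    fix n
    have "mcong (q n) (rep (Suc n) (yseq y0 (Suc n))) (rep n (yseq y0 (Suc n)))"
      by (rule rep_compat[OF yc]) simp
    also have "rep n (yseq y0 (Suc n)) = rep n (yseq y0 n)" by (rule yseq_stable[OF y0]) simp
    finally show "mcong (q n) (F (Suc n)) (F n)" by (simp add: F_def)
    show "q n dvd mdet (F n) - 1" unfolding F_def by (rule det_rep[OF yc])
  next
    show "mcong (int p) (F 1) 1" unfolding F_def using carrier_D(1)[OF yc[of 1]] unfolding good_def by blast
  qed
  define t where "t = ofseq p F"
  have tc: "t \<in> carrier G" unfolding t_def by (rule ofseq_carrier[OF g])
  have rt: "rep n t = rep n (yseq y0 n)" for n
    unfolding t_def rep_ofseq F_def by (rule carrier_D(3)[OF yc])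
  have rtm: "rep n t = rep n (yseq y0 m)" if "n \<le> m" for n m
    using rt yseq_stable[OF y0 that] by simp
  have st: "\<sigma> t = t"
  proof (rule eq_by_rep)
    fix n
    obtain m0 where m0: "\<forall>g\<in>carrier G. \<forall>h\<in>carrier G. rep m0 g = rep m0 h \<longrightarrow> rep n (\<sigma> g) = rep n (\<sigma> h)"
      using sig_cont by blast
    define M where "M = max m0 n"
    have "rep m0 t = rep m0 (yseq y0 M)" by (rule rtm) (simp add: M_def)
    then have e1: "rep n (\<sigma> t) = rep n (\<sigma> (yseq y0 M))" using m0 tc yc by blast
    have "inv\<^bsub>G\<^esub> (yseq y0 M) \<otimes>\<^bsub>G\<^esub> \<sigma> (yseq y0 M) \<in> lev (Suc (Suc M))" using yseq_inv[OF y0] by blast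
    then have "inv\<^bsub>G\<^esub> (yseq y0 M) \<otimes>\<^bsub>G\<^esub> \<sigma> (yseq y0 M) \<in> lev n"
    proof -
      have "n \<le> Suc (Suc M)" by (simp add: M_def)
      then show ?thesis using lev_mono[of n "Suc (Suc M)"] \<open>inv\<^bsub>G\<^esub> (yseq y0 M) \<otimes>\<^bsub>G\<^esub> \<sigma> (yseq y0 M) \<in> lev (Suc (Suc M))\<close> by blast
    qed
    then have e2: "rep n (yseq y0 M) = rep n (\<sigma> (yseq y0 M))"
      by (rule iffD1[OF lev_inv_mult_iff[OF yc sig_carrier[OF yc]]])
    have e3: "rep n t = rep n (yseq y0 M)" by (rule rtm) (simp add: M_def)
    show "rep n (\<sigma> t) = rep n t" using e1 e2 e3 by simp
  qed
  have "rep 2 t = rep 2 y0" using rt[of 2] yseq_stable0[OF y0, of 2] by simp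
  then have "inv\<^bsub>G\<^esub> y0 \<otimes>\<^bsub>G\<^esub> t \<in> lev 2" by (rule iffD2[OF lev_inv_mult_iff[OF y0(1) tc], OF sym])
  then show ?thesis using tc st by blast
qed

end

lemma two_id_pre: "- X + (X + S) = (S::m2)" by simp

context pp begin

lemma lemma_K:
  assumes t: "int p dvd mtr X0" and nz: "\<not> mcong (int p) X0 0"
  shows "\<exists>Y. int p dvd mtr Y \<and> (\<forall>l. \<not> mcong (int p) (br Y X0) (of_int l * X0))"
proof -
  obtain x1 x2 x3 x4 where X: "X0 = M2 x1 x2 x3 x4" by (cases X0)
  define e where "e = M2 0 1 0 0"
  define f where "f = M2 0 0 1 0"
  have te: "int p dvd mtr e" and tf: "int p dvd mtr f" by (simp_all add: e_def f_def mtr_def)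
  have be: "br e (M2 x1 x2 x3 x4) = M2 x3 (x4 - x1) 0 (- x3)" by (simp add: br_def e_def)
  have bf: "br f (M2 x1 x2 x3 x4) = M2 (- x2) 0 (x1 - x4) x2" by (simp add: br_def f_def)
  have pr: "prime (int p)" by (rule prime_int)
  have nz': "\<not> (int p dvd x1 \<and> int p dvd x2 \<and> int p dvd x3 \<and> int p dvd x4)"
    using nz by (simp add: X mcong_entries)
  have t': "int p dvd (x1 + x4)" using t by (simp add: X mtr_def)
  consider (B) "\<not> int p dvd x2" | (C) "\<not> int p dvd x3" | (A) "int p dvd x2" "int p dvd x3" by blast
  then show ?thesis
  proof cases
    case B
    have "\<not> mcong (int p) (br f X0) (of_int l * X0)" for l
    proof
      assume "mcong (int p) (br f X0) (of_int l * X0)"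
      then have d: "int p dvd (- x2 - l * x1)" "int p dvd (0 - l * x2)"
        by (simp_all add: bf X mcong_entries of_int_m2)
      have "int p dvd l * x2" using d(2) by simp
      then have "int p dvd l" using B prime_dvd_mult_iff[OF pr] by blast
      then have "int p dvd l * x1" by simp
      then have "int p dvd (- x2 - l * x1) + l * x1" using d(1) by (rule dvd_add[rotated])
      then show False using B by simp
    qed
    then show ?thesis using tf by blast
  next
    case C
    have "\<not> mcong (int p) (br e X0) (of_int l * X0)" for l
    proof
      assume "mcong (int p) (br e X0) (of_int l * X0)"
      then have d: "int p dvd (x3 - l * x1)" "int p dvd (0 - l * x3)"
        by (simp_all add: be X mcong_entries of_int_m2)
      have "int p dvd l * x3" using d(2) by simp
      then have "int p dvd l" using C prime_dvd_mult_iff[OF pr] by blast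
      then have "int p dvd l * x1" by simp
      then have "int p dvd (x3 - l * x1) + l * x1" using d(1) by (rule dvd_add[rotated])
      then show False using C by simp
    qed
    then show ?thesis using te by blast
  next
    case A
    have n1: "\<not> int p dvd x1"
    proof
      assume "int p dvd x1"
      then have "int p dvd x4" using t' by (metis add_diff_cancel_left' dvd_diff)
      then show False using nz' A \<open>int p dvd x1\<close> by blast
    qed
    have "\<not> mcong (int p) (br e X0) (of_int l * X0)" for l
    proof
      assume "mcong (int p) (br e X0) (of_int l * X0)"
      then have d: "int p dvd (x4 - x1 - l * x2)"
        by (simp_all add: be X mcong_entries of_int_m2)
      have "int p dvd l * x2" using A(1) by simp
      then have "int p dvd (x4 - x1 - l * x2) + l * x2" using d by (rule dvd_add[rotated])
      then have "int p dvd (x4 - x1)" by simp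
      then have "int p dvd (x1 + x4) - (x4 - x1)" using t' by (rule dvd_diff[rotated])
      then have "int p dvd 2 * x1" by (simp add: algebra_simps)
      then show False using n1 two_dvd_cancel by blast
    qed
    then show ?thesis using te by blast
  qed
qed

end

context aut begin

lemma fixed_point_exists:
  "\<exists>t0 X0. t0 \<in> carrier G \<and> \<sigma> t0 = t0 \<and> lead 1 t0 X0 \<and> tr0 X0 \<and> \<not> mcong (int p) X0 0
     \<and> mcong (int p) (sx X0) X0"
proof -
  obtain X where X: "tr0 X" "\<not> mcong (int p) (sx X) (- X)" using s_not_negid by blast
  obtain x where x: "lead 1 x X" using lead1_of[OF X(1)] by blast
  have xc: "x \<in> carrier G" by (rule lead_carrier[OF x])
  have one: "1 \<le> (1::nat)" by simp
  have z: "lead 1 (inv\<^bsub>G\<^esub> x \<otimes>\<^bsub>G\<^esub> \<sigma> x) (- X + sx X)"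
    by (rule lead_mult[OF one lead_inv[OF one x] s_lead'[OF one x]])
  obtain w where w: "lead 1 w (of_int h2 * (- X + sx X))"
      "inv\<^bsub>G\<^esub> (x \<otimes>\<^bsub>G\<^esub> w) \<otimes>\<^bsub>G\<^esub> \<sigma> (x \<otimes>\<^bsub>G\<^esub> w) \<in> lev (Suc 1)"
    using fix_step[OF one xc z] by blast
  define X0 where "X0 = X + of_int h2 * (- X + sx X)"
  have y0: "lead 1 (x \<otimes>\<^bsub>G\<^esub> w) X0" unfolding X0_def by (rule lead_mult[OF one x w(1)])
  have y0c: "x \<otimes>\<^bsub>G\<^esub> w \<in> carrier G" by (rule lead_carrier[OF y0])
  have y0l: "inv\<^bsub>G\<^esub> (x \<otimes>\<^bsub>G\<^esub> w) \<otimes>\<^bsub>G\<^esub> \<sigma> (x \<otimes>\<^bsub>G\<^esub> w) \<in> lev 2" using w(2) by (simp add: numeral_2_eq_2)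
  obtain t where t: "t \<in> carrier G" "\<sigma> t = t" "inv\<^bsub>G\<^esub> (x \<otimes>\<^bsub>G\<^esub> w) \<otimes>\<^bsub>G\<^esub> t \<in> lev 2"
    using fixed_limit[OF y0c y0l] by blast
  have t3: "inv\<^bsub>G\<^esub> (x \<otimes>\<^bsub>G\<^esub> w) \<otimes>\<^bsub>G\<^esub> t \<in> lev (Suc 1)" using t(3) by (simp add: numeral_2_eq_2)
  have lt: "lead 1 t X0" by (rule lead_via_lev[OF y0 t(1) t3 one])
  have "lead 1 (\<sigma> t) (sx X0)" by (rule s_lead'[OF one lt])
  then have "lead 1 t (sx X0)" using t(2) by simp
  then have fx: "mcong (int p) (sx X0) X0" by (rule lead_unique[OF _ lt])
  have tx: "tr0 X0" by (rule lead_trace[OF lt one])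
  have nz: "\<not> mcong (int p) X0 0"
  proof
    assume a: "mcong (int p) X0 0"
    have "mcong (int p) (of_int 2 * X0) (of_int 2 * 0)" by (rule mcong_mult[OF mcong_refl a])
    moreover have "of_int 2 * X0 = X + sx X + of_int (int p) * (sx X - X)"
      unfolding X0_def two_h_id h2_prop ..
    ultimately have "mcong (int p) (X + sx X + of_int (int p) * (sx X - X)) 0" by simp
    then have "mcong (int p) (X + sx X) 0" using mcong_trans[OF mcong_sym[OF mcong_add_smult]] by blast
    then have "mcong (int p) (- X + (X + sx X)) (- X + 0)" by (rule mcong_add[OF mcong_refl])
    then have "mcong (int p) (sx X) (- X)" by simp
    then show False using X(2) by simp
  qed
  show ?thesis using t(1,2) lt tx nz fx by blast
qed

end

lemma smul_add: "of_int a * X + of_int b * X = of_int (a + b) * (X::m2)"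
  by (simp add: distrib_right)
lemma smul_neg: "- (of_int a * X) = of_int (- a) * (X::m2)" by simp
lemma conj_cancel: "Y + Z + - Y = (Z::m2)" by (simp add: algebra_simps)
lemma smul_comm0: "of_int a * X * (of_int b * X) - of_int b * X * (of_int a * X) = of_int 0 * (X::m2)"
  by (cases X) (simp add: of_int_m2 algebra_simps m2_01)
lemma negneg_br: "(- Y) * (- X) - (- X) * (- Y) = br Y (X::m2)" by (simp add: br_def)

context aut begin

definition NN :: "m2 \<Rightarrow> mat2 set" where
  "NN X0 = {A \<in> carrier G. \<exists>l. lead 1 A (of_int l * X0)}"
definition MM :: "m2 \<Rightarrow> mat2 set" where
  "MM X0 = {A \<in> carrier G. \<exists>l. lead 2 A (of_int l * X0)}"

lemma LL_subgroup: "1 \<le> j \<Longrightarrow> subgroup {A \<in> carrier G. \<exists>l. lead j A (of_int l * X0)} G"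
proof -
  assume j: "1 \<le> j"
  show ?thesis
  proof (rule grp.subgroupI)
    show "{A \<in> carrier G. \<exists>l. lead j A (of_int l * X0)} \<subseteq> carrier G" by blast
    have "lead j \<one>\<^bsub>G\<^esub> (of_int 0 * X0)" using lead_one by simp
    then show "{A \<in> carrier G. \<exists>l. lead j A (of_int l * X0)} \<noteq> {}" using one_carrier by blast
  next
    fix A assume "A \<in> {A \<in> carrier G. \<exists>l. lead j A (of_int l * X0)}"
    then obtain l where c: "A \<in> carrier G" and l: "lead j A (of_int l * X0)" by blast
    have "lead j (inv\<^bsub>G\<^esub> A) (- (of_int l * X0))" by (rule lead_inv[OF j l])
    then have "lead j (inv\<^bsub>G\<^esub> A) (of_int (- l) * X0)" unfolding smul_neg .
    then show "inv\<^bsub>G\<^esub> A \<in> {A \<in> carrier G. \<exists>l. lead j A (of_int l * X0)}" using grp.inv_closed[OF c] by blast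
  next
    fix A B assume "A \<in> {A \<in> carrier G. \<exists>l. lead j A (of_int l * X0)}" "B \<in> {A \<in> carrier G. \<exists>l. lead j A (of_int l * X0)}"
    then obtain l l' where c: "A \<in> carrier G" "B \<in> carrier G" and l: "lead j A (of_int l * X0)"
      and l': "lead j B (of_int l' * X0)" by blast
    have "lead j (A \<otimes>\<^bsub>G\<^esub> B) (of_int l * X0 + of_int l' * X0)" by (rule lead_mult[OF j l l'])
    then have "lead j (A \<otimes>\<^bsub>G\<^esub> B) (of_int (l + l') * X0)" unfolding smul_add .
    then show "A \<otimes>\<^bsub>G\<^esub> B \<in> {A \<in> carrier G. \<exists>l. lead j A (of_int l * X0)}" using grp.m_closed[OF c] by blast
  qed
qed

lemma LL_closed: "1 \<le> j \<Longrightarrow> Sl21_closed p {A \<in> carrier G. \<exists>l. lead j A (of_int l * X0)}"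
  unfolding Sl21_closed_def
proof (intro conjI subsetI)
  assume j: "1 \<le> j"
  fix g assume "g \<in> Sl21_closure p {A \<in> carrier G. \<exists>l. lead j A (of_int l * X0)}"
  then have gc: "g \<in> carrier G" and h: "\<exists>s\<in>{A \<in> carrier G. \<exists>l. lead j A (of_int l * X0)}. red (Suc j) s = red (Suc j) g"
    unfolding Sl21_closure_def by blast+
  then obtain s l where sc: "s \<in> carrier G" and sl: "lead j s (of_int l * X0)" and r: "red (Suc j) s = red (Suc j) g"
    by blast
  have "inv\<^bsub>G\<^esub> s \<otimes>\<^bsub>G\<^esub> g \<in> lev (Suc j)"
    using iffD2[OF lev_inv_mult_iff[OF sc gc]] r red_rep by blast
  then have "lead j g (of_int l * X0)" by (rule lead_via_lev[OF sl gc _ j])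
  then show "g \<in> {A \<in> carrier G. \<exists>l. lead j A (of_int l * X0)}" using gc by blast
qed auto

lemma NN_normal: "normal (NN X0) G"
proof -
  have sg: "subgroup (NN X0) G" unfolding NN_def by (rule LL_subgroup) simp
  have "\<forall>x\<in>carrier G. \<forall>h\<in>NN X0. x \<otimes>\<^bsub>G\<^esub> h \<otimes>\<^bsub>G\<^esub> inv\<^bsub>G\<^esub> x \<in> NN X0"
  proof (intro ballI)
    fix x h assume x: "x \<in> carrier G" and h: "h \<in> NN X0"
    then obtain l where hc: "h \<in> carrier G" and l: "lead 1 h (of_int l * X0)" unfolding NN_def by blast
    obtain Yx where Yx: "lead 1 x Yx" using lead_exists x lev_1 by blast
    have one: "1 \<le> (1::nat)" by simp
    have "lead 1 (x \<otimes>\<^bsub>G\<^esub> h \<otimes>\<^bsub>G\<^esub> inv\<^bsub>G\<^esub> x) (Yx + of_int l * X0 + - Yx)"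
      by (rule lead_mult[OF one lead_mult[OF one Yx l] lead_inv[OF one Yx]])
    then have "lead 1 (x \<otimes>\<^bsub>G\<^esub> h \<otimes>\<^bsub>G\<^esub> inv\<^bsub>G\<^esub> x) (of_int l * X0)" unfolding conj_cancel .
    then show "x \<otimes>\<^bsub>G\<^esub> h \<otimes>\<^bsub>G\<^esub> inv\<^bsub>G\<^esub> x \<in> NN X0" unfolding NN_def using x hc by auto
  qed
  then show ?thesis using sg grp.normal_inv_iff by blast
qed

theorem main: "fpm_mod_frattini p \<sigma>"
proof -
  obtain t0 X0 where t0c: "t0 \<in> carrier G" and t0f: "\<sigma> t0 = t0" and lt0: "lead 1 t0 X0"
    and tx: "tr0 X0" and nz: "\<not> mcong (int p) X0 0" and fx: "mcong (int p) (sx X0) X0"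
    using fixed_point_exists by blast
  obtain Y where tY: "tr0 Y" and KY: "\<And>l. \<not> mcong (int p) (br Y X0) (of_int l * X0)"
    using lemma_K[OF tx nz] by blast
  define Fix where "Fix = {g \<in> carrier (Sl21 p). \<sigma> g = g}"
  define Ci where "Ci = Gamma_sigma_circ p \<sigma>"
  define Gs where "Gs = Gamma_sigma p \<sigma>"
  define Phi where "Phi = frattini p Gs"
  have one: "1 \<le> (1::nat)" by simp
  have NNsg: "subgroup (NN X0) G" unfolding NN_def by (rule LL_subgroup) simp
  have NNcl: "Sl21_closed p (NN X0)" unfolding NN_def by (rule LL_closed) simp
  have MMsg: "subgroup (MM X0) G" unfolding MM_def by (rule LL_subgroup) simp
  have MMcl: "Sl21_closed p (MM X0)" unfolding MM_def by (rule LL_closed) simp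
  have FixN: "Fix \<subseteq> NN X0"
  proof
    fix g assume "g \<in> Fix"
    then have gc: "g \<in> carrier G" and gf: "\<sigma> g = g" unfolding Fix_def by auto
    obtain W where W: "lead 1 g W" using lead_exists gc lev_1 by blast
    have tW: "tr0 W" by (rule lead_trace[OF W one])
    have "lead 1 (\<sigma> g) (sx W)" by (rule s_lead'[OF one W])
    then have "lead 1 g (sx W)" using gf by simp
    then have fW: "mcong (int p) (sx W) W" by (rule lead_unique[OF _ W])
    obtain l where "mcong (int p) W (of_int l * X0)" using fixed_line[OF tx nz fx tW fW] by blast
    then have "lead 1 g (of_int l * X0)" by (rule lead_cong[OF W])
    then show "g \<in> NN X0" unfolding NN_def using gc by blast
  qed
  have CiN: "Ci \<subseteq> NN X0"
    unfolding Ci_def Gamma_sigma_circ_def closed_subgroup_gen_def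
    using NNsg NNcl FixN unfolding Fix_def by (intro Inter_lower) blast
  have GsN: "Gs \<subseteq> NN X0"
    unfolding Gs_def Gamma_sigma_def closed_normal_closure_def
    using NN_normal NNcl CiN unfolding Ci_def by (intro Inter_lower) blast
  have t0Fix: "t0 \<in> Fix" unfolding Fix_def using t0c t0f by simp
  have t0Ci: "t0 \<in> Ci"
    unfolding Ci_def Gamma_sigma_circ_def closed_subgroup_gen_def using t0Fix unfolding Fix_def by blast
  have t0Gs: "t0 \<in> Gs"
    unfolding Gs_def Gamma_sigma_def closed_normal_closure_def using t0Ci unfolding Ci_def by blast
  have PhiM: "Phi \<subseteq> MM X0"
    unfolding Phi_def frattini_def closed_subgroup_gen_def
  proof (rule Inter_lower, intro CollectI conjI MMsg MMcl Un_least subsetI)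
    fix z assume "z \<in> {h [^]\<^bsub>Sl21 p\<^esub> p |h. h \<in> Gs}"
    then obtain h where z: "z = h [^]\<^bsub>G\<^esub> p" and h: "h \<in> Gs" by blast
    have "h \<in> NN X0" using h GsN by blast
    then obtain l where hc: "h \<in> carrier G" and l: "lead 1 h (of_int l * X0)" unfolding NN_def by blast
    have "lead (Suc 1) (h [^]\<^bsub>G\<^esub> p) (of_int l * X0)" by (rule lead_pow[OF one l])
    then have "lead 2 z (of_int l * X0)" unfolding z by (simp add: numeral_2_eq_2)
    then show "z \<in> MM X0" unfolding MM_def using hc z by blast
  next
    fix z assume "z \<in> {inv\<^bsub>Sl21 p\<^esub> h \<otimes>\<^bsub>Sl21 p\<^esub> inv\<^bsub>Sl21 p\<^esub> k \<otimes>\<^bsub>Sl21 p\<^esub> h \<otimes>\<^bsub>Sl21 p\<^esub> k |h k. h \<in> Gs \<and> k \<in> Gs}"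
    then obtain h k where z: "z = comm h k" and h: "h \<in> Gs" and k: "k \<in> Gs" unfolding comm_def by blast
    have "h \<in> NN X0" "k \<in> NN X0" using h k GsN by blast+
    then obtain l l' where hc: "h \<in> carrier G" and l: "lead 1 h (of_int l * X0)"
       and kc: "k \<in> carrier G" and l': "lead 1 k (of_int l' * X0)" unfolding NN_def by blast
    have "lead 2 (comm h k) (of_int l * X0 * (of_int l' * X0) - of_int l' * X0 * (of_int l * X0))"
      by (rule lead_comm[OF l l'])
    then have "lead 2 z (of_int 0 * X0)" unfolding z smul_comm0 .
    then show "z \<in> MM X0" unfolding MM_def using comm_carrier[OF hc kc] z by blast
  qed
  have onePhi: "\<one>\<^bsub>G\<^esub> \<in> Phi"
    unfolding Phi_def frattini_def closed_subgroup_gen_def using subgroup.one_closed by blast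
  obtain g where lg: "lead 1 g Y" using lead1_of[OF tY] by blast
  have gc: "g \<in> carrier G" by (rule lead_carrier[OF lg])
  define c where "c = g \<otimes>\<^bsub>G\<^esub> t0 \<otimes>\<^bsub>G\<^esub> inv\<^bsub>G\<^esub> g"
  have cc: "c \<in> carrier G" unfolding c_def using gc t0c by simp
  have neq: "r_coset G Phi c \<noteq> r_coset G Phi t0"
  proof
    assume eq: "r_coset G Phi c = r_coset G Phi t0"
    have "c \<in> r_coset G Phi c" unfolding r_coset_def using onePhi cc by force
    then have "c \<in> r_coset G Phi t0" using eq by simp
    then obtain f where f: "f \<in> Phi" and cf: "c = f \<otimes>\<^bsub>G\<^esub> t0" unfolding r_coset_def by blast
    have fM: "f \<in> MM X0" using f PhiM by blast
    then obtain l where fc: "f \<in> carrier G" and fl: "lead 2 f (of_int l * X0)" unfolding MM_def by blast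
    have "f = c \<otimes>\<^bsub>G\<^esub> inv\<^bsub>G\<^esub> t0" unfolding cf using fc t0c by (simp add: grp.m_assoc)
    also have "\<dots> = comm (inv\<^bsub>G\<^esub> g) (inv\<^bsub>G\<^esub> t0)" unfolding c_def comm_def using gc t0c by simp
    finally have fe: "f = comm (inv\<^bsub>G\<^esub> g) (inv\<^bsub>G\<^esub> t0)" .
    have "lead 2 (comm (inv\<^bsub>G\<^esub> g) (inv\<^bsub>G\<^esub> t0)) ((- Y) * (- X0) - (- X0) * (- Y))"
      by (rule lead_comm[OF lead_inv[OF one lg] lead_inv[OF one lt0]])
    then have "lead 2 f (br Y X0)" unfolding negneg_br fe .
    then have "mcong (int p) (br Y X0) (of_int l * X0)" by (rule lead_unique[OF _ fl])
    then show False using KY by blast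
  qed
  show ?thesis unfolding fpm_mod_frattini_def
    using gc t0Gs neq unfolding c_def Gs_def Phi_def by blast
qed

end

theorem mainTheorem15:
  fixes p :: nat and \<sigma> :: "mat2 \<Rightarrow> mat2"
  assumes "prime p" and "odd p"
    and "continuous_aut p \<sigma>"
    and "\<forall>g\<in>carrier (Sl21 p). \<sigma> (\<sigma> g) = g"
    and "\<exists>g\<in>carrier (Sl21 p). \<sigma> g \<noteq> g"
  shows "fpm_mod_frattini p \<sigma>"
proof -
  interpret a: aut p \<sigma> by unfold_locales (use assms in auto)
  show ?thesis by (rule a.main)
qed

end
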